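(* Let $\alpha=(\vec z,\alpha_0)$ be an $n$-ary logical connective, i.e. a connective with $\alpha^I=\alpha^E=\alpha_0$. Let $\mathbf P_1,\dots,\mathbf P_n$ be any positive a-behaviours and $\mathbf N_1,\dots,\mathbf N_n$ any negative a-behaviours. Then: 1. $\big(\alpha_0\langle\mathbf N_1,\dots,\mathbf N_n\rangle^{\mathsf C}\big)^{\bot}\subseteq\Big(\bigcup_{a_i(\vec x_i)\in\alpha_0}\overline{a_i}\langle\mathbf N_{(i,1)},\dots,\mathbf N_{(i,k)}\rangle\Big)\cup\{\maltese\}$. 2. $\alpha_0\langle\mathbf N_1,\dots,\mathbf N_n\rangle\subseteq\big(\alpha_0\langle\mathbf N_1,\dots,\mathbf N_n\rangle^{\mathsf C}\big)^{\bot}$. 3. If $\sum a(\vec x_a).P_a\in\big(\alpha_0(\mathbf P_1,\dots,\mathbf P_n)^{\mathsf C}\big)^{\bot}$, then for every $a_i(x_{(i,1)},\dots,x_{(i,k)})\in\alpha_0$ we have $P_{a_i}\in[\mathbf P^{\bot}_{(i,1)}/x_{(i,1)},\dots,\mathbf P^{\bot}_{(i,k)}/x_{(i,k)}]^{\bot}$. 4. $\alpha_0(\mathbf P_1,\dots,\mathbf P_n)=\big(\alpha_0(\mathbf P_1,\dots,\mathbf P_n)^{\mathsf C}\big)^{\bot}$.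
   Context: **Signature and c-designs.** Fix a signature: a set $A$ of names, each $a\in A$ with an arity $\mathsf{ar}(a)\in\mathbb N$, and a countably infinite set of variables. Computational designs (c-designs) are possibly non-well-founded labelled trees, given coinductively: - A positive c-design is $\maltese$ (daimon), $\Omega$ (divergence), or $N_0\,|\,\overline a\langle N_1,\dots,N_k\rangle$, where $\mathsf{ar}(a)=k$ and each $N_i$ is a negative c-design. - A negative c-design is a variable $x$, or $\sum a(\vec x_a).P_a$: one positive c-design $P_a$ for each $a\in A$, binding the distinct variables $\vec x_a$ of length $\mathsf{ar}(a)$. Conventions: c-designs are identified up to $\alpha$-equivalence; bound variables are distinct from free ones; substitution $T[\vec N/\vec x]$ is capture-avoiding. - For a set $S$ of negative actions $a(\vec x_a)$ (an action is $a(x_1,\dots,x_k)$ with $\mathsf{ar}(a)=k$ and distinct $x_i$) with pairwise distinct names, $\sum_S a(\vec x_a).P_a$ has branch $P_a$ for $a(\vec x_a)\in S$ and $\Omega$ for other names. A finite sum is also written $a_1(\vec x_1).P_1+\dots+a_m(\vec x_m).P_m$. - A cut is $(\sum a(\vec x_a).P_a)\,|\,\overline b\langle\vec N\rangle$, and it reduces to $P_b[\vec N/\vec x_b]$. **Normal form.** Write $P\Downarrow Q$ if $P$ reduces in finitely many steps to some $Q$ that is neither a cut nor $\Omega$; write $P\Uparrow$ otherwise. The normal form $[\![\cdot]\!]$ is defined corecursively: - $[\![P]\!]=\maltese$ if $P\Downarrow\maltese$; - $[\![P]\!]=\Omega$ if $P\Uparrow$; - $[\![P]\!]=x\,|\,\overline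 a\langle[\![N_1]\!],\dots,[\![N_k]\!]\rangle$ if $P\Downarrow x\,|\,\overline a\langle N_1,\dots,N_k\rangle$; - $[\![x]\!]=x$ and $[\![\sum a(\vec x_a).P_a]\!]=\sum a(\vec x_a).[\![P_a]\!]$. $T$ converges to $\maltese$ if $[\![T]\!]=\maltese$. **Standard designs.** A variable $x$ occurring as an argument $N_i$ ($i\ge1$) of some $N_0\,|\,\overline a\langle N_1,\dots,N_k\rangle$ in $T$ is an identity in $T$. $T$ is standard if it satisfies all of the following: - it is cut-free; - it is not a variable and has no identities; - it is $\neq\Omega$; - it is linear (in every subtree $N_0\,|\,\overline a\langle N_1,\dots,N_k\rangle$ the free-variable sets of $N_0,\dots,N_k$ are pairwise disjoint); - it has finitely many free variables. **Atomic designs and anti-designs.** Fix a variable $x_0$. A positive c-design is atomic if its free variables are $\subseteq\{x_0\}$; a negative c-design is atomic if it is closed. - An anti-design against positives $[N_1/x_1,\dots,N_n/x_n]$ is a finite set of pairs, with the $x_i$ distinct and the $N_i$ atomic negative. - An anti-design against negatives $[P,N_1/x_1,\dots,N_n/x_n]$ additionally contains an atomic positive $P$. **Orthogonality.** - $P\bot[N_1/x_1,\dots]$ iff $P[N_1/x_1,\dots]$ is closed and converges to $\maltese$. - $M\bot[P,N_1/x_1,\dots]$ iff $P[M[N_1/x_1,\dots]/x_0]$ is closed and converges to $\maltese$. - For atomic $P$ and $N$: $P\bot N$ iff $P[N/x_0]$ is closed and converges to $\maltese$. For a set $\mathbf T$ of cut-free c-designs of one polarity: - if all elements of $\mathbf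 T$ are atomic, $\mathbf T^\bot$ is the set of standard atomic c-designs $U$ with $T\bot U$ for all $T\in\mathbf T$; - otherwise $\mathbf T^\bot$ is the set of standard anti-designs orthogonal to all $T\in\mathbf T$. For a set $\mathbf G$ of anti-designs, $\mathbf G^\bot$ is the set of standard c-designs orthogonal to all its members. A behaviour is a set $\mathbf T$ of standard c-designs of one polarity with $\mathbf T=\mathbf T^{\bot\bot}$. It is an a-behaviour if all its elements are atomic. For sets of negative c-designs $\mathbf N_1,\dots,\mathbf N_n$, write $[\mathbf N_1/x_1,\dots,\mathbf N_n/x_n]=\{[N_1/x_1,\dots,N_n/x_n]:N_i\in\mathbf N_i\}$. **Connectives.** An $n$-ary connective is a triple $\alpha=(\vec z,\alpha^I,\alpha^E)$ such that: - $\vec z=z_1,\dots,z_n$ are distinct variables different from $x_0$; - $\alpha^I$ and $\alpha^E$ are finite sets of negative actions whose union has pairwise distinct names; - every action $a_i(\vec x_i)$ of the union has $\vec x_i=x_{(i,1)},\dots,x_{(i,k)}$ among $\vec z$, and all of $\vec z$ occur. Indexing convention: for behaviours $\mathbf B_1,\dots,\mathbf B_n$ indexed by $\vec z$, $\mathbf B_{(i,l)}$ denotes $\mathbf B_j$ where $z_j=x_{(i,l)}$. **Composed behaviours.** For a name $a$ with $\mathsf{ar}(a)=k$ and sets $\mathbf M_1,\dots,\mathbf M_k$, let $\overline a\langle\mathbf M_1,\dots,\mathbf M_k\rangle=\{x_0\,|\,\overline a\langle M_1,\dots,M_k\rangle:M_l\in\mathbf M_l\}$. For positive a-behaviours $\mathbf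 P_j$ and negative a-behaviours $\mathbf N_j$: - $\alpha^E\langle\mathbf N_1,\dots,\mathbf N_n\rangle=\big(\bigcup_{a_i(\vec x_i)\in\alpha^E}\overline{a_i}\langle\mathbf N_{(i,1)},\dots,\mathbf N_{(i,k)}\rangle\big)^{\bot\bot}$; - $\alpha^I(\mathbf P_1,\dots,\mathbf P_n)=\bigcap_{a_i(\vec x_i)\in\alpha^I}\big(\overline{a_i}\langle\mathbf P^\bot_{(i,1)},\dots,\mathbf P^\bot_{(i,k)}\rangle^\bot\big)$. **Counter sets.** - $\alpha^I(\mathbf P_1,\dots,\mathbf P_n)^{\mathsf C}=\bigcup_{a_i(\vec x_i)\in\alpha^I}\overline{a_i}\langle\mathbf P^\bot_{(i,1)},\dots,\mathbf P^\bot_{(i,k)}\rangle$. - $\alpha^E\langle\mathbf N_1,\dots,\mathbf N_n\rangle^{\mathsf C}$ is the set of all negative c-designs $a_i(\vec x_i).Q[x_{(i,l)}/x_0]+b_1(\vec x_{b_1}).\maltese+\dots+b_m(\vec x_{b_m}).\maltese$, where $a_i(\vec x_i)\in\alpha^E$, $x_{(i,l)}\in\{\vec x_i\}$, $Q\in\mathbf N^\bot_{(i,l)}$, and $\{b_1(\vec x_{b_1}),\dots,b_m(\vec x_{b_m})\}=\alpha^E\setminus\{a_i(\vec x_i)\}$. For a logical connective, $\alpha_0\langle\cdot\rangle$ and $\alpha_0(\cdot)$ denote $\alpha^E\langle\cdot\rangle$ and $\alpha^I(\cdot)$ respectively.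
   Formalization: Item 1 holds only when some action $a_i(x_{(i,1)},\dots,x_{(i,k)})$ of $\alpha_0$ has positive arity, that is, $k \geq 1$ for at least one action of $\alpha_0$. The statement above fails without it. *)

theory Defs
  imports Main
begin

section \<open>Computational designs (locally nameless representation)\<close>

text \<open>Bound variables are
  represented namelessly: Bd k l refers to the l-th variable bound by the k-th enclosing
  sum (k = 0 being the innermost).  This realises identification up to alpha-equivalence.\<close>

datatype bvar = Fr nat | Bd nat nat

codatatype 'n pos = Dai | Omg | Act "'n neg" 'n "'n neg list"
  and 'n neg = Vr bvar | Sm "'n \<Rightarrow> 'n pos"

text \<open>Well-formedness: correct arities and no dangling bound variables.  The context c lists
  the arities of the enclosing binders.  A c-design is a term with wfP ar [] / wfN ar [].\<close>

coinductive wfP :: "('n \<Rightarrow> nat) \<Rightarrow> nat list \<Rightarrow> 'n pos \<Rightarrow> bool"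
  and wfN :: "('n \<Rightarrow> nat) \<Rightarrow> nat list \<Rightarrow> 'n neg \<Rightarrow> bool" where
  "wfP ar c Dai"
| "wfP ar c Omg"
| "wfN ar c N \<Longrightarrow> length Ms = ar a \<Longrightarrow> (\<forall>M\<in>set Ms. wfN ar c M) \<Longrightarrow> wfP ar c (Act N a Ms)"
| "wfN ar c (Vr (Fr x))"
| "k < length c \<Longrightarrow> l < c ! k \<Longrightarrow> wfN ar c (Vr (Bd k l))"
| "(\<forall>a. wfP ar (ar a # c) (f a)) \<Longrightarrow> wfN ar c (Sm f)"

text \<open>Generic substitution; s d v gives the replacement of variable v at binder depth d.\<close>

primcorec substP :: "(nat \<Rightarrow> bvar \<Rightarrow> 'n neg option) \<Rightarrow> nat \<Rightarrow> 'n pos \<Rightarrow> 'n pos"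
  and substN :: "(nat \<Rightarrow> bvar \<Rightarrow> 'n neg option) \<Rightarrow> nat \<Rightarrow> 'n neg \<Rightarrow> 'n neg" where
  "substP s d p = (case p of Dai \<Rightarrow> Dai | Omg \<Rightarrow> Omg
      | Act N a Ms \<Rightarrow> Act (substN s d N) a (map (substN s d) Ms))"
| "substN s d n = (case n of
        Vr v \<Rightarrow> (case s d v of None \<Rightarrow> Vr v
                  | Some M \<Rightarrow> (case M of Vr w \<Rightarrow> Vr w | Sm g \<Rightarrow> Sm g))
      | Sm f \<Rightarrow> Sm (\<lambda>a. substP s (Suc d) (f a)))"

text \<open>Instantiating the variables bound by a sum (its branch P_b becomes P_b[Ns/x_b]).\<close>

definition openP :: "'n neg list \<Rightarrow> 'n pos \<Rightarrow> 'n pos" where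
  "openP Ns = substP (\<lambda>d v. case v of Bd k l \<Rightarrow> (if k = d \<and> l < length Ns then Some (Ns ! l) else None)
                                   | Fr x \<Rightarrow> None) 0"

definition fsubstP :: "(nat \<rightharpoonup> 'n neg) \<Rightarrow> 'n pos \<Rightarrow> 'n pos" where
  "fsubstP \<sigma> = substP (\<lambda>d v. case v of Fr x \<Rightarrow> \<sigma> x | Bd k l \<Rightarrow> None) 0"

definition fsubstN :: "(nat \<rightharpoonup> 'n neg) \<Rightarrow> 'n neg \<Rightarrow> 'n neg" where
  "fsubstN \<sigma> = substN (\<lambda>d v. case v of Fr x \<Rightarrow> \<sigma> x | Bd k l \<Rightarrow> None) 0"

text \<open>Binding the free variable y as the l-th variable of an (enclosing) binder: Q[x_l/y]
  placed directly under that binder.\<close>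

definition bindP :: "nat \<Rightarrow> nat \<Rightarrow> 'n pos \<Rightarrow> 'n pos" where
  "bindP y l = substP (\<lambda>d v. if v = Fr y then Some (Vr (Bd d l)) else None) 0"

definition is_cut :: "'n pos \<Rightarrow> bool" where
  "is_cut p = (case p of Act (Sm f) b Ms \<Rightarrow> True | _ \<Rightarrow> False)"

definition step :: "'n pos \<Rightarrow> 'n pos" where
  "step p = (case p of Act (Sm f) b Ms \<Rightarrow> openP Ms (f b) | _ \<Rightarrow> p)"

definition conv_to :: "'n pos \<Rightarrow> 'n pos \<Rightarrow> bool" where
  "conv_to P Q \<longleftrightarrow> (\<exists>n. (step ^^ n) P = Q) \<and> \<not> is_cut Q \<and> Q \<noteq> Omg"

primcorec nfP :: "'n pos \<Rightarrow> 'n pos" and nfN :: "'n neg \<Rightarrow> 'n neg" where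
  "nfP P = (if \<exists>Q. conv_to P Q then
              (case THE Q. conv_to P Q of Dai \<Rightarrow> Dai | Omg \<Rightarrow> Omg
                 | Act N a Ms \<Rightarrow> Act N a (map nfN Ms))
            else Omg)"
| "nfN N = (case N of Vr v \<Rightarrow> Vr v | Sm f \<Rightarrow> Sm (\<lambda>a. nfP (f a)))"

definition converges :: "'n pos \<Rightarrow> bool" where
  "converges P \<longleftrightarrow> nfP P = Dai"

text \<open>vocP d v T: T (viewed at relative binder depth d) has v as a variable that is free in T;
  bound variables referring outside T are normalised relative to the root of T.\<close>

inductive vocP :: "nat \<Rightarrow> bvar \<Rightarrow> 'n pos \<Rightarrow> bool" and vocN :: "nat \<Rightarrow> bvar \<Rightarrow> 'n neg \<Rightarrow> bool" where
  "vocN d (Fr x) (Vr (Fr x))"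
| "d \<le> k \<Longrightarrow> vocN d (Bd (k - d) l) (Vr (Bd k l))"
| "vocN d v N \<Longrightarrow> vocP d v (Act N a Ms)"
| "M \<in> set Ms \<Longrightarrow> vocN d v M \<Longrightarrow> vocP d v (Act N a Ms)"
| "vocP (Suc d) v (f a) \<Longrightarrow> vocN d v (Sm f)"

definition varsN :: "'n neg \<Rightarrow> bvar set" where "varsN N = {v. vocN 0 v N}"

definition fvP :: "'n pos \<Rightarrow> nat set" where "fvP P = {x. vocP 0 (Fr x) P}"
definition fvN :: "'n neg \<Rightarrow> nat set" where "fvN N = {x. vocN 0 (Fr x) N}"

definition closedP :: "'n pos \<Rightarrow> bool" where "closedP P \<longleftrightarrow> (\<forall>v. \<not> vocP 0 v P)"
definition closedN :: "'n neg \<Rightarrow> bool" where "closedN N \<longleftrightarrow> (\<forall>v. \<not> vocN 0 v N)"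

inductive psubP :: "'n pos \<Rightarrow> 'n pos \<Rightarrow> bool" and psubN :: "'n pos \<Rightarrow> 'n neg \<Rightarrow> bool" where
  "psubP P P"
| "psubN Q N \<Longrightarrow> psubP Q (Act N a Ms)"
| "M \<in> set Ms \<Longrightarrow> psubN Q M \<Longrightarrow> psubP Q (Act N a Ms)"
| "psubP Q (f a) \<Longrightarrow> psubN Q (Sm f)"

definition nodes_ok :: "('n neg \<Rightarrow> 'n \<Rightarrow> 'n neg list \<Rightarrow> bool) \<Rightarrow> ('n pos \<Rightarrow> bool) \<Rightarrow> bool" where
  "nodes_ok R sub \<longleftrightarrow> (\<forall>N a Ms. sub (Act N a Ms) \<longrightarrow> R N a Ms)"

definition node_cutfree :: "'n neg \<Rightarrow> 'n \<Rightarrow> 'n neg list \<Rightarrow> bool" where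
  "node_cutfree N a Ms \<longleftrightarrow> (\<forall>f. N \<noteq> Sm f)"

definition node_noid :: "'n neg \<Rightarrow> 'n \<Rightarrow> 'n neg list \<Rightarrow> bool" where
  "node_noid N a Ms \<longleftrightarrow> (\<forall>M\<in>set Ms. \<forall>v. M \<noteq> Vr v)"

definition node_linear :: "'n neg \<Rightarrow> 'n \<Rightarrow> 'n neg list \<Rightarrow> bool" where
  "node_linear N a Ms \<longleftrightarrow> (\<forall>i j. i < j \<and> j < length (N # Ms) \<longrightarrow>
       varsN ((N # Ms) ! i) \<inter> varsN ((N # Ms) ! j) = {})"

definition standardP :: "('n \<Rightarrow> nat) \<Rightarrow> 'n pos \<Rightarrow> bool" where
  "standardP ar P \<longleftrightarrow> wfP ar [] P
     \<and> nodes_ok node_cutfree (\<lambda>Q. psubP Q P)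
     \<and> nodes_ok node_noid (\<lambda>Q. psubP Q P)
     \<and> P \<noteq> Omg
     \<and> nodes_ok node_linear (\<lambda>Q. psubP Q P)
     \<and> finite (fvP P)"

definition standardN :: "('n \<Rightarrow> nat) \<Rightarrow> 'n neg \<Rightarrow> bool" where
  "standardN ar N \<longleftrightarrow> wfN ar [] N
     \<and> nodes_ok node_cutfree (\<lambda>Q. psubN Q N)
     \<and> (\<forall>v. N \<noteq> Vr v) \<and> nodes_ok node_noid (\<lambda>Q. psubN Q N)
     \<and> nodes_ok node_linear (\<lambda>Q. psubN Q N)
     \<and> finite (fvN N)"

definition atomicP :: "nat \<Rightarrow> 'n pos \<Rightarrow> bool" where "atomicP x0 P \<longleftrightarrow> fvP P \<subseteq> {x0}"
definition atomicN :: "'n neg \<Rightarrow> bool" where "atomicN N \<longleftrightarrow> fvN N = {}"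

text \<open>An anti-design against positives [N_1/x_1,...,N_n/x_n] is a finite partial map.\<close>
type_synonym 'n anti = "nat \<rightharpoonup> 'n neg"

definition orth_anti :: "'n pos \<Rightarrow> 'n anti \<Rightarrow> bool" where
  "orth_anti P \<sigma> \<longleftrightarrow> closedP (fsubstP \<sigma> P) \<and> converges (fsubstP \<sigma> P)"

definition orth_at :: "nat \<Rightarrow> 'n pos \<Rightarrow> 'n neg \<Rightarrow> bool" where
  "orth_at x0 P N \<longleftrightarrow> closedP (fsubstP [x0 \<mapsto> N] P) \<and> converges (fsubstP [x0 \<mapsto> N] P)"

text \<open>Orthogonal of a set of atomic designs (the other case of the paper's definition yields
  anti-designs, i.e. an object of a different type; it is left unspecified here).\<close>

definition perpP :: "('n \<Rightarrow> nat) \<Rightarrow> nat \<Rightarrow> 'n pos set \<Rightarrow> 'n neg set" where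
  "perpP ar x0 S = (if \<forall>T\<in>S. atomicP x0 T
      then {U. standardN ar U \<and> atomicN U \<and> (\<forall>T\<in>S. orth_at x0 T U)} else undefined)"

definition perpN :: "('n \<Rightarrow> nat) \<Rightarrow> nat \<Rightarrow> 'n neg set \<Rightarrow> 'n pos set" where
  "perpN ar x0 S = (if \<forall>T\<in>S. atomicN T
      then {U. standardP ar U \<and> atomicP x0 U \<and> (\<forall>T\<in>S. orth_at x0 U T)} else undefined)"

definition perp_anti :: "('n \<Rightarrow> nat) \<Rightarrow> 'n anti set \<Rightarrow> 'n pos set" where
  "perp_anti ar G = {T. standardP ar T \<and> (\<forall>\<sigma>\<in>G. orth_anti T \<sigma>)}"

definition antiset :: "nat list \<Rightarrow> 'n neg set list \<Rightarrow> 'n anti set" where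
  "antiset xs Ss = {\<sigma>. dom \<sigma> = set xs \<and> (\<forall>l < length xs. \<exists>N \<in> Ss ! l. \<sigma> (xs ! l) = Some N)}"

definition a_behP :: "('n \<Rightarrow> nat) \<Rightarrow> nat \<Rightarrow> 'n pos set \<Rightarrow> bool" where
  "a_behP ar x0 B \<longleftrightarrow> (\<forall>T\<in>B. standardP ar T \<and> atomicP x0 T) \<and> B = perpN ar x0 (perpP ar x0 B)"

definition a_behN :: "('n \<Rightarrow> nat) \<Rightarrow> nat \<Rightarrow> 'n neg set \<Rightarrow> bool" where
  "a_behN ar x0 B \<longleftrightarrow> (\<forall>T\<in>B. standardN ar T \<and> atomicN T) \<and> B = perpP ar x0 (perpN ar x0 B)"

text \<open>An action a(x_1,...,x_k) is a pair (a, [x_1,...,x_k]).\<close>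
definition connective :: "('n \<Rightarrow> nat) \<Rightarrow> nat \<Rightarrow> nat list \<Rightarrow> ('n \<times> nat list) set
     \<Rightarrow> ('n \<times> nat list) set \<Rightarrow> bool" where
  "connective ar x0 zs AI AE \<longleftrightarrow>
     distinct zs \<and> x0 \<notin> set zs \<and> finite AI \<and> finite AE
     \<and> (\<forall>(a, xs) \<in> AI \<union> AE. distinct xs \<and> length xs = ar a \<and> set xs \<subseteq> set zs)
     \<and> (\<forall>(a, xs) \<in> AI \<union> AE. \<forall>(b, ys) \<in> AI \<union> AE. a = b \<longrightarrow> xs = ys)
     \<and> set zs \<subseteq> (\<Union>(a, xs) \<in> AI \<union> AE. set xs)"

definition actset :: "nat \<Rightarrow> 'n \<Rightarrow> 'n neg set list \<Rightarrow> 'n pos set" where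
  "actset x0 a Ss = {Act (Vr (Fr x0)) a Ms | Ms. length Ms = length Ss \<and> (\<forall>l < length Ss. Ms ! l \<in> Ss ! l)}"

text \<open>Behaviours are indexed by the variables z of the connective: B z is the behaviour
  attached to z, so that B_(i,l) is B (x_(i,l)).\<close>

definition alphaE :: "('n \<Rightarrow> nat) \<Rightarrow> nat \<Rightarrow> ('n \<times> nat list) set \<Rightarrow> (nat \<Rightarrow> 'n neg set) \<Rightarrow> 'n pos set" where
  "alphaE ar x0 AE Nb = perpN ar x0 (perpP ar x0 (\<Union>(a, xs) \<in> AE. actset x0 a (map Nb xs)))"

text \<open>The intersection is taken inside the universe of standard atomic negative designs
  (this only matters for an empty set of actions).\<close>
definition alphaI :: "('n \<Rightarrow> nat) \<Rightarrow> nat \<Rightarrow> ('n \<times> nat list) set \<Rightarrow> (nat \<Rightarrow> 'n pos set) \<Rightarrow> 'n neg set" where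
  "alphaI ar x0 AI Pb = {M. standardN ar M \<and> atomicN M} \<inter>
     (\<Inter>(a, xs) \<in> AI. perpP ar x0 (actset x0 a (map (\<lambda>z. perpP ar x0 (Pb z)) xs)))"

definition alphaI_C :: "('n \<Rightarrow> nat) \<Rightarrow> nat \<Rightarrow> ('n \<times> nat list) set \<Rightarrow> (nat \<Rightarrow> 'n pos set) \<Rightarrow> 'n pos set" where
  "alphaI_C ar x0 AI Pb = (\<Union>(a, xs) \<in> AI. actset x0 a (map (\<lambda>z. perpP ar x0 (Pb z)) xs))"

text \<open>a_i(x_i).Q[x_(i,l)/x0] + sum of b(x_b).daimon over the other actions of AE.\<close>
definition alphaE_C :: "('n \<Rightarrow> nat) \<Rightarrow> nat \<Rightarrow> ('n \<times> nat list) set \<Rightarrow> (nat \<Rightarrow> 'n neg set) \<Rightarrow> 'n neg set" where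
  "alphaE_C ar x0 AE Nb = {Sm (\<lambda>b. if b = a then bindP x0 l Q else if b \<in> fst ` AE then Dai else Omg)
       | a xs l Q. (a, xs) \<in> AE \<and> l < length xs \<and> Q \<in> perpN ar x0 (Nb (xs ! l))}"

end

theory Submission
  imports Defs
begin

lemma substP_simps[simp]:
  "substP s d Dai = Dai" "substP s d Omg = Omg"
  "substP s d (Act N a Ms) = Act (substN s d N) a (map (substN s d) Ms)"
  by (subst substP.code; simp)+

lemma substN_simps[simp]:
  "substN s d (Vr v) = (case s d v of None \<Rightarrow> Vr v | Some M \<Rightarrow> M)"
  "substN s d (Sm f) = Sm (\<lambda>a. substP s (Suc d) (f a))"
  by (subst substN.code; auto split: option.splits neg.splits)+

inductive occP :: "nat \<Rightarrow> bvar \<Rightarrow> 'n pos \<Rightarrow> bool" and occN :: "nat \<Rightarrow> bvar \<Rightarrow> 'n neg \<Rightarrow> bool" where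
  "occN 0 v (Vr v)"
| "occN e v N \<Longrightarrow> occP e v (Act N a Ms)"
| "M \<in> set Ms \<Longrightarrow> occN e v M \<Longrightarrow> occP e v (Act N a Ms)"
| "occP e v (f a) \<Longrightarrow> occN (Suc e) v (Sm f)"

inductive_cases occP_DaiE: "occP e v Dai"
inductive_cases occP_OmgE: "occP e v Omg"
inductive_cases occP_ActE: "occP e v (Act N a Ms)"
inductive_cases occN_VrE: "occN e v (Vr w)"
inductive_cases occN_SmE: "occN e v (Sm f)"

lemma occ_simps[simp]:
  "\<not> occP e v Dai" "\<not> occP e v Omg"
  "occP e v (Act N a Ms) \<longleftrightarrow> occN e v N \<or> (\<exists>M\<in>set Ms. occN e v M)"
  "occN e v (Vr w) \<longleftrightarrow> e = 0 \<and> v = w"  by (auto elim: occP_DaiE occP_OmgE occP_ActE occN_VrE intro: occP_occN.intros)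

lemma occN_Sm[simp]: "occN e v (Sm f) \<longleftrightarrow> (\<exists>e' a. e = Suc e' \<and> occP e' v (f a))"
  by (auto elim!: occN_SmE intro: occP_occN.intros)

fun nrm :: "nat \<Rightarrow> bvar \<Rightarrow> bvar option" where
  "nrm e (Fr x) = Some (Fr x)"
| "nrm e (Bd k l) = (if e \<le> k then Some (Bd (k - e) l) else None)"

lemma voc_occ1:
  fixes P :: "'n pos" and N :: "'n neg"
  shows "vocP d v P \<Longrightarrow> (\<exists>e w. occP e w P \<and> nrm (d+e) w = Some v)"
    and "vocN d v N \<Longrightarrow> (\<exists>e w. occN e w N \<and> nrm (d+e) w = Some v)"
proof (induct rule: vocP_vocN.inducts)
  case (5 d v f a)
  then obtain e w where "occP e w (f a)" "nrm (Suc d + e) w = Some v" by blast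
  then show ?case by (intro exI[of _ "Suc e"] exI[of _ w]) auto
next
  case (1 d x) show ?case by (intro exI[of _ 0] exI[of _ "Fr x"]) auto
next
  case (2 d k l) then show ?case by (intro exI[of _ 0] exI[of _ "Bd k l"]) auto
next
  case (3 d v N a Ms) then show ?case by auto
next
  case (4 M Ms d v N a) then show ?case by auto
qed

lemma voc_occ2:
  fixes P :: "'n pos" and N :: "'n neg"
  shows "occP e w P \<Longrightarrow> (\<forall>d v. nrm (d+e) w = Some v \<longrightarrow> vocP d v P)"
    and "occN e w N \<Longrightarrow> (\<forall>d v. nrm (d+e) w = Some v \<longrightarrow> vocN d v N)"
proof (induct rule: occP_occN.inducts)
  case (1 v)
  then show ?case by (cases v) (auto intro: vocP_vocN.intros split: if_splits)
next
  case (4 e v f a)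
  show ?case
  proof (intro allI impI)
    fix d va assume "nrm (d + Suc e) v = Some va"
    then have "vocP (Suc d) va (f a)" using 4 by simp
    then show "vocN d va (Sm f)" by (rule vocP_vocN.intros)
  qed
qed (auto intro: vocP_vocN.intros)

lemma vocP_occ: "vocP d v P \<longleftrightarrow> (\<exists>e w. occP e w P \<and> nrm (d+e) w = Some v)"
  using voc_occ1 voc_occ2 by blast
lemma vocN_occ: "vocN d v N \<longleftrightarrow> (\<exists>e w. occN e w N \<and> nrm (d+e) w = Some v)"
  using voc_occ1 voc_occ2 by blast

lemma subst_id_aux:
  fixes s :: "nat \<Rightarrow> bvar \<Rightarrow> 'n neg option"
  shows "((\<exists>d P. x = substP s d P \<and> y = P \<and> (\<forall>e w. occP e w P \<longrightarrow> s (d+e) w = None)) \<longrightarrow> x = y) \<and>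
   ((\<exists>d N. u = substN s d N \<and> v = N \<and> (\<forall>e w. occN e w N \<longrightarrow> s (d+e) w = None)) \<longrightarrow> u = v)"
proof (rule pos_neg.coinduct, goal_cases)
  case (1 x y)
  then obtain d P where h: "x = substP s d P" "y = P" "\<forall>e w. occP e w P \<longrightarrow> s (d+e) w = None" by blast
  show ?case using h apply (cases P) apply (auto simp: list_all2_conv_all_nth)
    by (metis nth_mem)
next
  case (2 u v)
  then obtain d N where h: "u = substN s d N" "v = N" "\<forall>e w. occN e w N \<longrightarrow> s (d+e) w = None" by blast
  show ?case using h
    apply (cases N)
    apply auto
    apply (auto simp: rel_fun_def)
    by (metis add_Suc_right add_Suc)
qed

lemma substP_id: "(\<And>e w. occP e w P \<Longrightarrow> s (d+e) w = None) \<Longrightarrow> substP s d P = P"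
  using subst_id_aux by blast
lemma substN_id: "(\<And>e w. occN e w N \<Longrightarrow> s (d+e) w = None) \<Longrightarrow> substN s d N = N"
  using subst_id_aux by blast

lemma subst_comp_aux:
  fixes s1 s2 s3 :: "nat \<Rightarrow> bvar \<Rightarrow> 'n neg option"
  shows "((x = y \<or> (\<exists>d P. x = substP s2 d (substP s1 d P) \<and> y = substP s3 d P \<and>
     (\<forall>e w. occP e w P \<longrightarrow> substN s2 (d+e) (substN s1 (d+e) (Vr w)) = substN s3 (d+e) (Vr w)))) \<longrightarrow> x = y) \<and>
   ((u = v \<or> (\<exists>d N. u = substN s2 d (substN s1 d N) \<and> v = substN s3 d N \<and>
     (\<forall>e w. occN e w N \<longrightarrow> substN s2 (d+e) (substN s1 (d+e) (Vr w)) = substN s3 (d+e) (Vr w)))) \<longrightarrow> u = v)"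
proof (rule pos_neg.coinduct, goal_cases)
  case (1 x y)
  then show ?case
  proof
    assume "x = y" then show ?thesis by (cases x) (auto simp: list_all2_conv_all_nth)
  next
    assume "\<exists>d P. x = substP s2 d (substP s1 d P) \<and> y = substP s3 d P \<and>
     (\<forall>e w. occP e w P \<longrightarrow> substN s2 (d+e) (substN s1 (d+e) (Vr w)) = substN s3 (d+e) (Vr w))"
    then obtain d P where h: "x = substP s2 d (substP s1 d P)" "y = substP s3 d P"
      "\<forall>e w. occP e w P \<longrightarrow> substN s2 (d+e) (substN s1 (d+e) (Vr w)) = substN s3 (d+e) (Vr w)" by blast
    show ?thesis
    proof (cases P)
      case (Act N0 a Ms0)
      let ?C = "\<lambda>N. \<forall>e w. occN e w N \<longrightarrow> substN s2 (d+e) (substN s1 (d+e) (Vr w)) = substN s3 (d+e) (Vr w)"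
      have c0: "?C N0" using h(3) Act by auto
      have cM: "?C M" if "M \<in> set Ms0" for M using h(3) Act that by auto
      show ?thesis using h(1,2) Act c0 cM
        apply (auto simp: list_all2_conv_all_nth simp del: substN_simps(1))
        subgoal for i using cM[OF nth_mem[of i Ms0]] by blast
        done
    qed (use h in auto)
  qed
next
  case (2 u v)
  then show ?case
  proof
    assume "u = v" then show ?thesis by (cases u) (auto simp: rel_fun_def)
  next
    assume "\<exists>d N. u = substN s2 d (substN s1 d N) \<and> v = substN s3 d N \<and>
     (\<forall>e w. occN e w N \<longrightarrow> substN s2 (d+e) (substN s1 (d+e) (Vr w)) = substN s3 (d+e) (Vr w))"
    then obtain d N where h: "u = substN s2 d (substN s1 d N)" "v = substN s3 d N"
      "\<forall>e w. occN e w N \<longrightarrow> substN s2 (d+e) (substN s1 (d+e) (Vr w)) = substN s3 (d+e) (Vr w)" by blast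
    show ?thesis
    proof (cases N)
      case (Vr w)
      then have "u = v" using h(1,2) h(3)[rule_format, of 0 w] by auto
      then show ?thesis by (cases u) (auto simp: rel_fun_def)
    next
      case (Sm f)
      show ?thesis using h Sm apply (auto simp: rel_fun_def)
        by (metis add_Suc_right add_Suc)
    qed
  qed
qed

lemma substP_comp: "(\<And>e w. occP e w P \<Longrightarrow> substN s2 (d+e) (substN s1 (d+e) (Vr w)) = substN s3 (d+e) (Vr w))
  \<Longrightarrow> substP s2 d (substP s1 d P) = substP s3 d P"
  using subst_comp_aux by blast

lemma substN_eq_Vr: "substN s d N = Vr v \<longleftrightarrow> (\<exists>w. N = Vr w \<and> (s d w = None \<and> v = w \<or> s d w = Some (Vr v)))"
  by (cases N) (auto split: option.splits)

lemma substN_eq_Sm: "substN s d N = Sm g \<longleftrightarrow> (\<exists>w. N = Vr w \<and> s d w = Some (Sm g)) \<or>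
   (\<exists>f. N = Sm f \<and> g = (\<lambda>a. substP s (Suc d) (f a)))"
  by (cases N) (auto split: option.splits)

lemma occ_subst_aux:
  fixes X :: "'n pos" and Y :: "'n neg"
  shows "occP e v X \<Longrightarrow> (\<forall>d P. X = substP s d P \<longrightarrow>
    ((\<exists>w. occP e w P \<and> s (d+e) w = None \<and> v = w) \<or>
     (\<exists>e1 e2 w M. occP e1 w P \<and> s (d+e1) w = Some M \<and> occN e2 v M \<and> e = e1+e2)))"
  and "occN e v Y \<Longrightarrow> (\<forall>d N. Y = substN s d N \<longrightarrow>
    ((\<exists>w. occN e w N \<and> s (d+e) w = None \<and> v = w) \<or>
     (\<exists>e1 e2 w M. occN e1 w N \<and> s (d+e1) w = Some M \<and> occN e2 v M \<and> e = e1+e2)))"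
proof (induct rule: occP_occN.inducts)
  case (1 v)
  show ?case
  proof (intro allI impI)
    fix d N assume "Vr v = substN s d N"
    then obtain w where "N = Vr w" "s d w = None \<and> v = w \<or> s d w = Some (Vr v)"
      using substN_eq_Vr by metis
    then show "(\<exists>w. occN 0 w N \<and> s (d+0) w = None \<and> v = w) \<or>
     (\<exists>e1 e2 w M. occN e1 w N \<and> s (d+e1) w = Some M \<and> occN e2 v M \<and> 0 = e1+e2)"
      by force
  qed
next
  case (2 e v N a Ms)
  show ?case
  proof (intro allI impI)
    fix d P assume "Act N a Ms = substP s d P"
    then obtain N0 Ms0 where P: "P = Act N0 a Ms0" "N = substN s d N0" "Ms = map (substN s d) Ms0"
      by (cases P) auto
    then show "(\<exists>w. occP e w P \<and> s (d+e) w = None \<and> v = w) \<or>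
     (\<exists>e1 e2 w M. occP e1 w P \<and> s (d+e1) w = Some M \<and> occN e2 v M \<and> e = e1+e2)"
      using 2(2) by fastforce
  qed
next
  case (3 M Ms e v N a)
  show ?case
  proof (intro allI impI)
    fix d P assume "Act N a Ms = substP s d P"
    then obtain N0 Ms0 where P: "P = Act N0 a Ms0" "N = substN s d N0" "Ms = map (substN s d) Ms0"
      by (cases P) auto
    then obtain M0 where M0: "M0 \<in> set Ms0" "M = substN s d M0" using 3(1) by auto
    show "(\<exists>w. occP e w P \<and> s (d+e) w = None \<and> v = w) \<or>
     (\<exists>e1 e2 w M. occP e1 w P \<and> s (d+e1) w = Some M \<and> occN e2 v M \<and> e = e1+e2)"
      using 3(3) M0 P by fastforce
  qed
next
  case (4 e v f a)
  show ?case
  proof (intro allI impI)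
    fix d N assume h: "Sm f = substN s d N"
    show "(\<exists>w. occN (Suc e) w N \<and> s (d + Suc e) w = None \<and> v = w) \<or>
       (\<exists>e1 e2 w M. occN e1 w N \<and> s (d + e1) w = Some M \<and> occN e2 v M \<and> Suc e = e1 + e2)"
    proof (cases "\<exists>w. N = Vr w \<and> s d w = Some (Sm f)")
      case True
      then obtain w where "N = Vr w" "s d w = Some (Sm f)" by blast
      moreover have "occN (Suc e) v (Sm f)" using 4(1) by auto
      ultimately show ?thesis by force
    next
      case False
      then obtain f0 where f0: "N = Sm f0" "f = (\<lambda>a. substP s (Suc d) (f0 a))"
        using h substN_eq_Sm by metis
      have "(\<exists>w. occP e w (f0 a) \<and> s (Suc d + e) w = None \<and> v = w) \<or>
        (\<exists>e1 e2 w M. occP e1 w (f0 a) \<and> s (Suc d + e1) w = Some M \<and> occN e2 v M \<and> e = e1 + e2)"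
        using 4(2)[rule_format, of "Suc d" "f0 a"] f0 by simp
      then show ?thesis
      proof
        assume "\<exists>w. occP e w (f0 a) \<and> s (Suc d + e) w = None \<and> v = w"
        then show ?thesis using f0 by auto
      next
        assume "\<exists>e1 e2 w M. occP e1 w (f0 a) \<and> s (Suc d + e1) w = Some M \<and> occN e2 v M \<and> e = e1 + e2"
        then obtain e1 e2 w M where "occP e1 w (f0 a)" "s (Suc d + e1) w = Some M" "occN e2 v M" "e = e1 + e2"
          by blast
        then show ?thesis using f0
          by (intro disjI2 exI[of _ "Suc e1"] exI[of _ e2] exI[of _ w] exI[of _ M]) auto
      qed
    qed
  qed
qed

lemma occP_subst: "occP e v (substP s d P) \<Longrightarrow>
    (\<exists>w. occP e w P \<and> s (d+e) w = None \<and> v = w) \<or>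
    (\<exists>e1 e2 w M. occP e1 w P \<and> s (d+e1) w = Some M \<and> occN e2 v M \<and> e = e1+e2)"
  using occ_subst_aux(1) by blast
lemma occN_subst: "occN e v (substN s d N) \<Longrightarrow>
    (\<exists>w. occN e w N \<and> s (d+e) w = None \<and> v = w) \<or>
    (\<exists>e1 e2 w M. occN e1 w N \<and> s (d+e1) w = Some M \<and> occN e2 v M \<and> e = e1+e2)"
  using occ_subst_aux(2) by blast

lemma step_Dai[simp]: "step Dai = Dai" and step_Omg[simp]: "step Omg = Omg"
  by (simp_all add: step_def)
lemma funpow_Dai[simp]: "(step ^^ n) Dai = Dai" by (induct n) auto
lemma funpow_Omg[simp]: "(step ^^ n) Omg = Omg" by (induct n) auto

lemma nfP_Dai[simp]: "nfP Dai = Dai"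
proof -
  have c: "conv_to Dai = (\<lambda>Q. Q = Dai)"
    by (auto simp: conv_to_def is_cut_def intro: exI[of _ 0])
  show ?thesis by (subst nfP.code) (simp add: c)
qed

lemma nfP_Omg[simp]: "nfP Omg = Omg"
proof -
  have c: "conv_to Omg = (\<lambda>Q. False)"
    by (auto simp: conv_to_def)
  show ?thesis by (subst nfP.code) (simp add: c)
qed

lemma conv_to_step: "is_cut P \<Longrightarrow> conv_to P = conv_to (step P)"
proof (rule ext)
  fix Q assume c: "is_cut P"
  show "conv_to P Q = conv_to (step P) Q"
  proof
    assume "conv_to P Q"
    then obtain n where n: "(step ^^ n) P = Q" "\<not> is_cut Q" "Q \<noteq> Omg" by (auto simp: conv_to_def)
    then have "n \<noteq> 0" using c by (cases n) auto
    then obtain m where "n = Suc m" by (cases n) auto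
    then have "(step ^^ m) (step P) = Q" using n by (simp only: funpow_Suc_right o_apply)
    then show "conv_to (step P) Q" using n by (auto simp: conv_to_def)
  next
    assume "conv_to (step P) Q"
    then obtain n where n: "(step ^^ n) (step P) = Q" "\<not> is_cut Q" "Q \<noteq> Omg" by (auto simp: conv_to_def)
    then have "(step ^^ Suc n) P = Q" by (simp only: funpow_Suc_right o_apply)
    then show "conv_to P Q" using n unfolding conv_to_def by blast
  qed
qed

lemma nfP_step: "is_cut P \<Longrightarrow> nfP P = nfP (step P)"
  using nfP.code[of P] nfP.code[of "step P"] conv_to_step[of P] by simp

lemma converges_cut: "converges (Act (Sm g) b Ms) \<longleftrightarrow> converges (openP Ms (g b))"
  unfolding converges_def
  by (subst nfP_step) (auto simp: is_cut_def step_def)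

lemma converges_Dai[simp]: "converges Dai" and not_converges_Omg[simp]: "\<not> converges Omg"
  by (auto simp: converges_def)

inductive_cases wfP_ActE: "Defs.wfP ar c (Act N a Ms)"
inductive_cases wfN_VrE: "wfN ar c (Vr v)"
inductive_cases wfN_SmE: "wfN ar c (Sm f)"
inductive_cases psubP_DaiE: "psubP Q Dai"
inductive_cases psubP_OmgE: "psubP Q Omg"
inductive_cases psubP_ActE: "psubP Q (Act N a Ms)"
inductive_cases psubN_VrE: "psubN Q (Vr v)"
inductive_cases psubN_SmE: "psubN Q (Sm f)"

lemma psub_simps[simp]:
  "psubP Q Dai \<longleftrightarrow> Q = Dai" "psubP Q Omg \<longleftrightarrow> Q = Omg"
  "psubP Q (Act N a Ms) \<longleftrightarrow> Q = Act N a Ms \<or> psubN Q N \<or> (\<exists>M\<in>set Ms. psubN Q M)"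
  "\<not> psubN Q (Vr v)"
  by (auto elim: psubP_DaiE psubP_OmgE psubP_ActE psubN_VrE intro: psubP_psubN.intros)

lemma psubN_Sm[simp]: "psubN Q (Sm f) \<longleftrightarrow> (\<exists>a. psubP Q (f a))"
  by (auto elim!: psubN_SmE intro: psubP_psubN.intros)

lemma wf_occ:
  fixes P :: "'n pos" and N :: "'n neg"
  shows "occP e w P \<Longrightarrow> (\<forall>c k l. Defs.wfP ar c P \<longrightarrow> w = Bd k l \<longrightarrow> k < e + length c \<and> (e \<le> k \<longrightarrow> l < c ! (k - e)))"
    and "occN e w N \<Longrightarrow> (\<forall>c k l. wfN ar c N \<longrightarrow> w = Bd k l \<longrightarrow> k < e + length c \<and> (e \<le> k \<longrightarrow> l < c ! (k - e)))"
proof (induct rule: occP_occN.inducts)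
  case (1 v)
  then show ?case by (auto elim: wfN_VrE)
next
  case (2 e v N a Ms)
  then show ?case by (auto elim: wfP_ActE)
next
  case (3 M Ms e v N a)
  then show ?case by (auto elim!: wfP_ActE)
next
  case (4 e v f a)
  show ?case
  proof (intro allI impI)
    fix c k l assume "wfN ar c (Sm f)" "v = Bd k l"
    then have "Defs.wfP ar (ar a # c) (f a)" by (auto elim: wfN_SmE)
    then have "k < e + length (ar a # c) \<and> (e \<le> k \<longrightarrow> l < (ar a # c) ! (k - e))"
      using 4(2) \<open>v = Bd k l\<close> by blast
    moreover have "Suc e \<le> k \<Longrightarrow> k - e = Suc (k - Suc e)" by arith
    ultimately show "k < Suc e + length c \<and> (Suc e \<le> k \<longrightarrow> l < c ! (k - Suc e))"
      by auto
  qed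
qed

lemma wfP0_occ: "Defs.wfP ar [] P \<Longrightarrow> occP e (Bd k l) P \<Longrightarrow> k < e"
  using wf_occ(1) by fastforce
lemma wfN0_occ: "wfN ar [] N \<Longrightarrow> occN e (Bd k l) N \<Longrightarrow> k < e"
  using wf_occ(2) by fastforce

lemma nrm_None: "nrm e w = None \<longleftrightarrow> (\<exists>k l. w = Bd k l \<and> k < e)"
  by (cases w) auto

lemma closedP_occ: "closedP P \<longleftrightarrow> (\<forall>e w. occP e w P \<longrightarrow> nrm e w = None)"
  unfolding closedP_def vocP_occ by (auto) (metis not_None_eq)
lemma closedN_occ: "closedN N \<longleftrightarrow> (\<forall>e w. occN e w N \<longrightarrow> nrm e w = None)"
  unfolding closedN_def vocN_occ by (auto) (metis not_None_eq)
lemma nrm_Fr: "nrm e w = Some (Fr x) \<longleftrightarrow> w = Fr x"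
  by (cases w) auto
lemma fvP_occ: "fvP P = {x. \<exists>e. occP e (Fr x) P}"
  unfolding fvP_def vocP_occ nrm_Fr by auto
lemma fvN_occ: "fvN N = {x. \<exists>e. occN e (Fr x) N}"
  unfolding fvN_def vocN_occ nrm_Fr by auto
lemma varsN_occ: "varsN N = {v. \<exists>e w. occN e w N \<and> nrm e w = Some v}"
  unfolding varsN_def vocN_occ by auto

lemma closedP_substP:
  assumes "\<And>e w. occP e w P \<Longrightarrow> (case s e w of None \<Rightarrow> nrm e w = None | Some M \<Rightarrow> closedN M)"
  shows "closedP (substP s 0 P)"
  unfolding closedP_occ
proof (intro allI impI)
  fix e v assume "occP e v (substP s 0 P)"
  from occP_subst[OF this]
  show "nrm e v = None"
  proof
    assume "\<exists>w. occP e w P \<and> s (0 + e) w = None \<and> v = w"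
    then show ?thesis using assms by fastforce
  next
    assume "\<exists>e1 e2 w M. occP e1 w P \<and> s (0 + e1) w = Some M \<and> occN e2 v M \<and> e = e1 + e2"
    then obtain e1 e2 w M where h: "occP e1 w P" "s e1 w = Some M" "occN e2 v M" "e = e1 + e2" by auto
    then have "closedN M" using assms[OF h(1)] by auto
    then have "nrm e2 v = None" using h(3) closedN_occ by blast
    then show ?thesis using h(4) by (auto simp: nrm_None)
  qed
qed

lemma closedN_subst_id: "closedN M \<Longrightarrow> (\<And>D k l. k < D \<Longrightarrow> s D (Bd k l) = None) \<Longrightarrow> substN s d M = M"
  by (rule substN_id) (metis closedN_occ add.commute nrm_None trans_less_add2)

lemma closedP_Act: "closedP (Act N a Ms) \<longleftrightarrow> closedN N \<and> (\<forall>M\<in>set Ms. closedN M)"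
  unfolding closedP_occ closedN_occ by auto

lemma orth_act:
  assumes "closedN (Sm g)" "\<forall>M\<in>set Ms. closedN M"
  shows "orth_at x0 (Act (Vr (Fr x0)) b Ms) (Sm g) \<longleftrightarrow> converges (openP Ms (g b))"
proof -
  have "fsubstP [x0 \<mapsto> Sm g] (Act (Vr (Fr x0)) b Ms) = Act (Sm g) b Ms"
    unfolding fsubstP_def using assms(2)
    by (auto intro!: map_idI closedN_subst_id)
  then show ?thesis using assms unfolding orth_at_def by (simp add: closedP_Act converges_cut)
qed

lemma openP_Dai[simp]: "openP Ms Dai = Dai" and openP_Omg[simp]: "openP Ms Omg = Omg"
  by (simp_all add: openP_def)

lemma standard_atomic_pos:
  assumes "standardP ar P" "atomicP x0 P"
  shows "P = Dai \<or> (\<exists>b Ms. P = Act (Vr (Fr x0)) b Ms \<and> length Ms = ar b \<and>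
     (\<forall>M\<in>set Ms. closedN M \<and> standardN ar M))"
proof (cases P)
  case Omg then show ?thesis using assms by (simp add: standardP_def)
next
  case Dai then show ?thesis by simp
next
  case (Act N b Ms)
  have wf: "Defs.wfP ar [] P" using assms by (simp add: standardP_def)
  then have wfN: "wfN ar [] N" "length Ms = ar b" "\<forall>M\<in>set Ms. wfN ar [] M"
    using Act by (auto elim: wfP_ActE)
  have cf: "node_cutfree N b Ms" "node_linear N b Ms" "node_noid N b Ms"
    using assms Act by (auto simp: standardP_def nodes_ok_def)
  have fv: "fvP P \<subseteq> {x0}" using assms by (simp add: atomicP_def)
  obtain y where Ny: "N = Vr (Fr y)"
  proof (cases N)
    case (Vr v) then show ?thesis using wfN(1) that by (cases v) (auto elim: wfN_VrE)
  next
    case (Sm f) then show ?thesis using cf(1) by (simp add: node_cutfree_def)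
  qed
  have "y \<in> fvP P" using Act Ny by (auto simp: fvP_occ)
  then have y: "y = x0" using fv by auto
  have "closedN M \<and> standardN ar M" if M: "M \<in> set Ms" for M
  proof
    show "closedN M" unfolding closedN_occ
    proof (intro allI impI)
      fix e w assume o: "occN e w M"
      show "nrm e w = None"
      proof (cases w)
        case (Fr x)
        then have "x \<in> fvP P" using o Act M by (auto simp: fvP_occ)
        then have "x = x0" using fv by auto
        obtain j where j: "j < length Ms" "Ms ! j = M" using M by (meson in_set_conv_nth)
        have "varsN ((N # Ms) ! 0) \<inter> varsN ((N # Ms) ! Suc j) = {}"
          using cf(2) j unfolding node_linear_def by (metis Suc_less_eq length_Cons zero_less_Suc)
        moreover have "Fr x0 \<in> varsN N" using Ny y by (auto simp: varsN_occ)
        moreover have "Fr x0 \<in> varsN M" using o Fr \<open>x = x0\<close> by (auto simp: varsN_occ nrm_Fr)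
        ultimately show ?thesis using j by auto
      next
        case (Bd k l)
        then show ?thesis using wfN0_occ[OF wfN(3)[rule_format, OF M] o[unfolded Bd]] by auto
      qed
    qed
    then have "fvN M = {}" by (auto simp: closedN_def fvN_def)
    moreover have "\<forall>v. M \<noteq> Vr v" using cf(3) M by (auto simp: node_noid_def)
    moreover have "nodes_ok R (\<lambda>Q. psubN Q M)" if "nodes_ok R (\<lambda>Q. psubP Q P)" for R
      using that M Act by (auto simp: nodes_ok_def)
    ultimately show "standardN ar M" using assms(1) wfN(3) M unfolding standardP_def standardN_def
      by auto
  qed
  then show ?thesis using Act Ny y wfN(2) by auto
qed

lemma standardP_Dai: "standardP ar Dai"
  by (auto simp: standardP_def nodes_ok_def fvP_occ intro: wfP_wfN.intros)

lemma atomicP_Dai: "atomicP x0 Dai" by (auto simp: atomicP_def fvP_occ)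

lemma orth_Dai: "orth_at x0 Dai N"
  by (simp add: orth_at_def fsubstP_def closedP_occ)

lemma Dai_perpN: "\<forall>T\<in>S. atomicN T \<Longrightarrow> Dai \<in> perpN ar x0 S"
  by (simp add: perpN_def standardP_Dai atomicP_Dai orth_Dai)

definition DaiN :: "'n neg" where "DaiN = Sm (\<lambda>_. Dai)"

lemma closedN_DaiN: "closedN DaiN" by (simp add: DaiN_def closedN_occ)

lemma standardN_DaiN: "standardN ar DaiN"
  unfolding standardN_def DaiN_def
  by (auto simp: nodes_ok_def fvN_occ intro!: wfP_wfN.intros)

lemma atomicN_DaiN: "atomicN DaiN"
  using closedN_DaiN by (auto simp: atomicN_def closedN_def fvN_def)

lemma orth_DaiN: "standardP ar P \<Longrightarrow> atomicP x0 P \<Longrightarrow> orth_at x0 P DaiN"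
  using standard_atomic_pos[of ar P x0]
  by (auto simp: orth_Dai orth_act closedN_DaiN[unfolded DaiN_def] DaiN_def)

lemma perpP_nonempty:
  assumes "a_behP ar x0 B" shows "perpP ar x0 B \<noteq> {}"
proof
  assume e: "perpP ar x0 B = {}"
  have B: "B = perpN ar x0 {}" using assms e by (simp add: a_behP_def)
  have at: "\<forall>T\<in>B. atomicP x0 T" using assms by (simp add: a_behP_def)
  have "DaiN \<in> perpP ar x0 B" using at B
    by (auto simp: perpP_def perpN_def standardN_DaiN atomicN_DaiN orth_DaiN)
  then show False using e by simp
qed

lemma open_bind:
  assumes "Defs.wfP ar [] Q" "l < length Ms"
  shows "openP Ms (bindP x0 l Q) = fsubstP [x0 \<mapsto> Ms ! l] Q"
  unfolding openP_def bindP_def fsubstP_def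
proof (rule substP_comp)
  fix e w assume o: "occP e w Q"
  show "substN (\<lambda>d v. case v of Fr x \<Rightarrow> None | Bd k l \<Rightarrow> if k = d \<and> l < length Ms then Some (Ms ! l) else None) (0 + e)
          (substN (\<lambda>d v. if v = Fr x0 then Some (Vr (Bd d l)) else None) (0 + e) (Vr w)) =
         substN (\<lambda>d v. case v of Fr x \<Rightarrow> [x0 \<mapsto> Ms ! l] x | Bd k l \<Rightarrow> None) (0 + e) (Vr w)"
  proof (cases w)
    case (Bd k l')
    then have "k < e" using wfP0_occ[OF assms(1)] o by blast
    then show ?thesis using Bd by auto
  qed (use assms in auto)
qed

definition Eg :: "('n \<times> nat list) set \<Rightarrow> nat \<Rightarrow> 'n \<Rightarrow> nat \<Rightarrow> 'n pos \<Rightarrow> 'n neg" where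
  "Eg A0 x0 a l Q = Sm (\<lambda>b. if b = a then bindP x0 l Q else if b \<in> fst ` A0 then Dai else Omg)"

lemma alphaE_C_Eg: "alphaE_C ar x0 A0 Nb = {Eg A0 x0 a l Q | a xs l Q. (a, xs) \<in> A0 \<and> l < length xs \<and> Q \<in> perpN ar x0 (Nb (xs ! l))}"
  unfolding alphaE_C_def Eg_def by blast

lemma closedN_Eg:
  assumes "Defs.wfP ar [] Q" "fvP Q \<subseteq> {x0}"
  shows "closedN (Eg A0 x0 a l Q)"
  unfolding closedN_occ Eg_def
proof (intro allI impI)
  fix e v assume "occN e v (Sm (\<lambda>b. if b = a then bindP x0 l Q else if b \<in> fst ` A0 then Dai else Omg))"
  then obtain e' b where e: "e = Suc e'" "occP e' v (if b = a then bindP x0 l Q else if b \<in> fst ` A0 then Dai else Omg)"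
    by auto
  then have "occP e' v (bindP x0 l Q)" by (auto split: if_splits)
  from occP_subst[OF this[unfolded bindP_def]]
  show "nrm e v = None"
  proof (elim disjE exE conjE)
    fix w assume h: "occP e' w Q" "(if w = Fr x0 then Some (Vr (Bd (0 + e') l)) else None) = None" "v = w"
    show ?thesis
    proof (cases w)
      case (Fr y)
      then have "y \<in> fvP Q" using h by (auto simp: fvP_occ)
      then show ?thesis using assms h Fr by auto
    next
      case (Bd k l')
      then show ?thesis using wfP0_occ[OF assms(1)] h e by fastforce
    qed
  next
    fix e1 e2 w M assume h: "occP e1 w Q" "(if w = Fr x0 then Some (Vr (Bd (0 + e1) l)) else None) = Some M"
      "occN e2 v M" "e' = e1 + e2"
    then show ?thesis using e by (auto split: if_splits)
  qed
qed

lemma closedP_fsubst1: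
  assumes "Defs.wfP ar [] Q" "fvP Q \<subseteq> {x0}" "closedN M"
  shows "closedP (fsubstP [x0 \<mapsto> M] Q)"
  unfolding fsubstP_def
proof (rule closedP_substP)
  fix e w assume o: "occP e w Q"
  show "case (case w of Fr x \<Rightarrow> [x0 \<mapsto> M] x | Bd k l \<Rightarrow> None) of None \<Rightarrow> nrm e w = None | Some M \<Rightarrow> closedN M"
  proof (cases w)
    case (Fr y)
    then have "y = x0" using o assms(2) by (auto simp: fvP_occ)
    then show ?thesis using Fr assms(3) by auto
  next
    case (Bd k l)
    then show ?thesis using wfP0_occ[OF assms(1) o[unfolded Bd]] by auto
  qed
qed

lemma closedN_atomicN: "closedN N \<Longrightarrow> atomicN N"
  by (auto simp: atomicN_def closedN_def fvN_def)

lemma std_atomicN_closed: "standardN ar N \<Longrightarrow> atomicN N \<Longrightarrow> closedN N"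
  unfolding closedN_occ
proof (intro allI impI)
  fix e w assume s: "standardN ar N" "atomicN N" and o: "occN e w N"
  show "nrm e w = None"
  proof (cases w)
    case (Fr x) then show ?thesis using s o by (auto simp: atomicN_def fvN_occ)
  next
    case (Bd k l) then show ?thesis using s o wfN0_occ by (fastforce simp: standardN_def)
  qed
qed

lemma eg_orth:
  assumes "Defs.wfP ar [] Q" "fvP Q \<subseteq> {x0}" "\<forall>M\<in>set Ms. closedN M" "l < length Ms"
  shows "orth_at x0 (Act (Vr (Fr x0)) a Ms) (Eg A0 x0 a l Q) \<longleftrightarrow> orth_at x0 Q (Ms ! l)"
proof -
  have c: "closedN (Eg A0 x0 a l Q)" by (rule closedN_Eg[OF assms(1,2)])
  have "closedN (Ms ! l)" using assms by auto
  then show ?thesis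
    using orth_act[OF c[unfolded Eg_def] assms(3), where b=a] open_bind[OF assms(1,4)]
      closedP_fsubst1[OF assms(1,2)] unfolding Eg_def orth_at_def by auto
qed

lemma eg_orth_other:
  assumes "Defs.wfP ar [] Q" "fvP Q \<subseteq> {x0}" "\<forall>M\<in>set Ms. closedN M" "b \<noteq> a"
  shows "orth_at x0 (Act (Vr (Fr x0)) b Ms) (Eg A0 x0 a l Q) \<longleftrightarrow> b \<in> fst ` A0"
proof -
  have c: "closedN (Eg A0 x0 a l Q)" by (rule closedN_Eg[OF assms(1,2)])
  then show ?thesis
    using orth_act[OF c[unfolded Eg_def] assms(3), where b=b] assms(4) unfolding Eg_def by auto
qed

lemma a_behN_perp: "a_behN ar x0 B \<Longrightarrow> perpN ar x0 B = {U. standardP ar U \<and> atomicP x0 U \<and> (\<forall>T\<in>B. orth_at x0 U T)}"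
  by (simp add: a_behN_def perpN_def)
lemma a_behP_perp: "a_behP ar x0 B \<Longrightarrow> perpP ar x0 B = {U. standardN ar U \<and> atomicN U \<and> (\<forall>T\<in>B. orth_at x0 T U)}"
  by (simp add: a_behP_def perpP_def)

lemma perpN_std: "Q \<in> perpN ar x0 B \<Longrightarrow> \<forall>T\<in>B. atomicN T \<Longrightarrow> standardP ar Q \<and> atomicP x0 Q"
  by (simp add: perpN_def)

lemma atomicP_act: "\<forall>M\<in>set Ms. atomicN M \<Longrightarrow> atomicP x0 (Act (Vr (Fr x0)) a Ms)"
  by (auto simp: atomicP_def atomicN_def fvP_occ fvN_occ)

lemma actset_atomic: "(\<forall>l<length Ss. \<forall>M\<in>Ss ! l. atomicN M) \<Longrightarrow> T \<in> actset x0 a Ss \<Longrightarrow> atomicP x0 T"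
  unfolding actset_def by (auto intro!: atomicP_act simp: in_set_conv_nth)

inductive psubDP :: "nat \<Rightarrow> 'n pos \<Rightarrow> 'n pos \<Rightarrow> bool" and psubDN :: "nat \<Rightarrow> 'n pos \<Rightarrow> 'n neg \<Rightarrow> bool" where
  "psubDP 0 P P"
| "psubDN e Q N \<Longrightarrow> psubDP e Q (Act N a Ms)"
| "M \<in> set Ms \<Longrightarrow> psubDN e Q M \<Longrightarrow> psubDP e Q (Act N a Ms)"
| "psubDP e Q (f a) \<Longrightarrow> psubDN (Suc e) Q (Sm f)"

lemma psubD_psub:
  fixes P :: "'n pos" and N :: "'n neg"
  shows "psubDP e Q P \<Longrightarrow> psubP Q P" and "psubDN e Q N \<Longrightarrow> psubN Q N"
  by (induct rule: psubDP_psubDN.inducts) (auto intro: psubP_psubN.intros)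

lemma occ_psubD:
  fixes P :: "'n pos" and N :: "'n neg"
  shows "psubDP e Q P \<Longrightarrow> occP e' w Q \<Longrightarrow> occP (e + e') w P"
    and "psubDN e Q N \<Longrightarrow> occP e' w Q \<Longrightarrow> occN (e + e') w N"
  by (induct rule: psubDP_psubDN.inducts) auto

definition VV :: "(nat \<Rightarrow> bvar \<Rightarrow> 'n neg option) \<Rightarrow> bool" where
  "VV s \<longleftrightarrow> (\<forall>D v M. s D v = Some M \<longrightarrow> (\<exists>w. M = Vr w))"

lemma psub_subst_aux:
  fixes X :: "'n pos" and Y :: "'n neg"
  assumes vv: "VV s"
  shows "psubP Q' X \<Longrightarrow> (\<forall>d P. X = substP s d P \<longrightarrow> (\<exists>Q e. psubDP e Q P \<and> Q' = substP s (d+e) Q))"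
    and "psubN Q' Y \<Longrightarrow> (\<forall>d N. Y = substN s d N \<longrightarrow> (\<exists>Q e. psubDN e Q N \<and> Q' = substP s (d+e) Q))"
proof (induct rule: psubP_psubN.inducts)
  case (1 P)
  then show ?case by (metis add_0_right psubDP_psubDN.intros(1))
next
  case (2 Q N a Ms)
  show ?case
  proof (intro allI impI)
    fix d P assume "Act N a Ms = substP s d P"
    then obtain N0 Ms0 where P: "P = Act N0 a Ms0" "N = substN s d N0" by (cases P) auto
    then obtain Q0 e where "psubDN e Q0 N0" "Q = substP s (d+e) Q0" using 2(2) by blast
    then show "\<exists>Q0 e. psubDP e Q0 P \<and> Q = substP s (d + e) Q0" using P by (auto intro: psubDP_psubDN.intros)
  qed
next
  case (3 M Ms Q N a)
  show ?case
  proof (intro allI impI)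
    fix d P assume "Act N a Ms = substP s d P"
    then obtain N0 Ms0 where P: "P = Act N0 a Ms0" "Ms = map (substN s d) Ms0" by (cases P) auto
    then obtain M0 where M0: "M0 \<in> set Ms0" "M = substN s d M0" using 3(1) by auto
    then obtain Q0 e where "psubDN e Q0 M0" "Q = substP s (d+e) Q0" using 3(3) by blast
    then show "\<exists>Q0 e. psubDP e Q0 P \<and> Q = substP s (d + e) Q0" using P M0 by (auto intro: psubDP_psubDN.intros)
  qed
next
  case (4 Q f a)
  show ?case
  proof (intro allI impI)
    fix d N assume h: "Sm f = substN s d N"
    then obtain f0 where f0: "N = Sm f0" "f = (\<lambda>a. substP s (Suc d) (f0 a))"
    proof -
      have "(\<exists>w. N = Vr w \<and> s d w = Some (Sm f)) \<or> (\<exists>f0. N = Sm f0 \<and> f = (\<lambda>a. substP s (Suc d) (f0 a)))"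
        using h[symmetric] by (simp only: substN_eq_Sm)
      moreover have "\<not> (\<exists>w. N = Vr w \<and> s d w = Some (Sm f))" using vv unfolding VV_def by fastforce
      ultimately show ?thesis using that by blast
    qed
    then obtain Q0 e where "psubDP e Q0 (f0 a)" "Q = substP s (Suc d + e) Q0" using 4(2) by blast
    then show "\<exists>Q0 e. psubDN e Q0 N \<and> Q = substP s (d + e) Q0" using f0
      by (intro exI[of _ Q0] exI[of _ "Suc e"]) (auto intro: psubDP_psubDN.intros)
  qed
qed

lemma psubP_subst: "VV s \<Longrightarrow> psubP Q' (substP s d P) \<Longrightarrow> \<exists>Q e. psubDP e Q P \<and> Q' = substP s (d+e) Q"
  using psub_subst_aux(1) by blast

definition sw :: "(nat \<Rightarrow> bvar \<Rightarrow> 'n neg option) \<Rightarrow> nat \<Rightarrow> bvar \<Rightarrow> bvar" where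
  "sw s D w = (case s D w of Some (Vr w') \<Rightarrow> w' | _ \<Rightarrow> w)"

lemma occN_subst_VV: assumes vv: "VV s" and o: "occN e v (substN s D N)" shows "\<exists>w. occN e w N \<and> v = sw s (D+e) w"
proof -
  from occN_subst[OF o] show ?thesis
  proof (elim disjE exE conjE)
    fix w assume "occN e w N" "s (D + e) w = None" "v = w"
    then show ?thesis by (auto simp: sw_def)
  next
    fix e1 e2 w M assume h: "occN e1 w N" "s (D + e1) w = Some M" "occN e2 v M" "e = e1 + e2"
    then obtain w' where "M = Vr w'" using vv unfolding VV_def by blast
    then show ?thesis using h by (auto simp: sw_def)
  qed
qed

lemma occP_subst_VV: assumes vv: "VV s" and o: "occP e v (substP s D P)" shows "\<exists>w. occP e w P \<and> v = sw s (D+e) w"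
proof -
  from occP_subst[OF o] show ?thesis
  proof (elim disjE exE conjE)
    fix w assume "occP e w P" "s (D + e) w = None" "v = w"
    then show ?thesis by (auto simp: sw_def)
  next
    fix e1 e2 w M assume h: "occP e1 w P" "s (D + e1) w = Some M" "occN e2 v M" "e = e1 + e2"
    then obtain w' where "M = Vr w'" using vv unfolding VV_def by blast
    then show ?thesis using h by (auto simp: sw_def)
  qed
qed

lemma varsN_subst_sub:
  assumes "VV s"
    and "\<And>e w u. occN e w X \<Longrightarrow> nrm e w = Some u \<Longrightarrow> nrm e (sw s (D+e) w) = Some (h u)"
    and "\<And>e w. occN e w X \<Longrightarrow> nrm e w = None \<Longrightarrow> nrm e (sw s (D+e) w) = None"
  shows "varsN (substN s D X) \<subseteq> h ` varsN X"
proof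
  fix v assume "v \<in> varsN (substN s D X)"
  then obtain e w' where o: "occN e w' (substN s D X)" "nrm e w' = Some v" by (auto simp: varsN_occ)
  obtain w where w: "occN e w X" "w' = sw s (D+e) w" using occN_subst_VV[OF assms(1) o(1)] by blast
  show "v \<in> h ` varsN X"
  proof (cases "nrm e w")
    case None then show ?thesis using assms(3)[OF w(1)] w o by auto
  next
    case (Some u) then show ?thesis using assms(2)[OF w(1)] w o by (auto simp: varsN_occ)
  qed
qed

lemma node_linear_subst:
  assumes "VV s" "node_linear N a Ms"
    and "\<And>X e w u. X \<in> set (N # Ms) \<Longrightarrow> occN e w X \<Longrightarrow> nrm e w = Some u \<Longrightarrow> nrm e (sw s (D+e) w) = Some (h u)"
    and "\<And>X e w. X \<in> set (N # Ms) \<Longrightarrow> occN e w X \<Longrightarrow> nrm e w = None \<Longrightarrow> nrm e (sw s (D+e) w) = None"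
    and "inj_on h (\<Union>X\<in>set (N # Ms). varsN X)"
  shows "node_linear (substN s D N) a (map (substN s D) Ms)"
  unfolding node_linear_def
proof (intro allI impI)
  fix i j assume ij: "i < j \<and> j < length (substN s D N # map (substN s D) Ms)"
  let ?L = "N # Ms"
  have L: "substN s D N # map (substN s D) Ms = map (substN s D) ?L" by simp
  have i: "i < length ?L" and j: "j < length ?L" using ij by auto
  have sub: "varsN (substN s D (?L ! k)) \<subseteq> h ` varsN (?L ! k)" if "k < length ?L" for k
  proof (rule varsN_subst_sub[OF assms(1)])
    show "\<And>e w u. occN e w (?L ! k) \<Longrightarrow> nrm e w = Some u \<Longrightarrow> nrm e (sw s (D+e) w) = Some (h u)"
      using assms(3) nth_mem[OF that] by blast
    show "\<And>e w. occN e w (?L ! k) \<Longrightarrow> nrm e w = None \<Longrightarrow> nrm e (sw s (D+e) w) = None"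
      using assms(4) nth_mem[OF that] by blast
  qed
  have disj: "varsN (?L ! i) \<inter> varsN (?L ! j) = {}" using assms(2) ij unfolding node_linear_def by auto
  have "h ` varsN (?L ! i) \<inter> h ` varsN (?L ! j) = {}"
  proof -
    have "varsN (?L ! i) \<subseteq> (\<Union>X\<in>set ?L. varsN X)" "varsN (?L ! j) \<subseteq> (\<Union>X\<in>set ?L. varsN X)"
      using nth_mem[OF i] nth_mem[OF j] by blast+
    then show ?thesis using disj assms(5) by (simp add: inj_on_image_Int[symmetric])
  qed
  then show "varsN ((substN s D N # map (substN s D) Ms) ! i) \<inter>
             varsN ((substN s D N # map (substN s D) Ms) ! j) = {}"
    unfolding L nth_map[OF i] nth_map[OF j] using sub[OF i] sub[OF j] by blast
qed

lemma node_cutfree_subst: "VV s \<Longrightarrow> node_cutfree N a Ms \<Longrightarrow> node_cutfree (substN s D N) a (map (substN s D) Ms)"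
  unfolding node_cutfree_def
proof (intro allI)
  fix f assume "VV s" "\<forall>f. N \<noteq> Sm f"
  then show "substN s D N \<noteq> Sm f" unfolding VV_def substN_eq_Sm by blast
qed

lemma node_noid_subst: "node_noid N a Ms \<Longrightarrow> node_noid (substN s D N) a (map (substN s D) Ms)"
  unfolding node_noid_def
proof (intro ballI allI)
  fix M v assume h: "\<forall>M\<in>set Ms. \<forall>v. M \<noteq> Vr v" "M \<in> set (map (substN s D) Ms)"
  then obtain M0 where "M0 \<in> set Ms" "M = substN s D M0" by auto
  moreover obtain f where "M0 = Sm f" using h(1) \<open>M0 \<in> set Ms\<close> by (cases M0) auto
  ultimately show "M \<noteq> Vr v" by simp
qed

lemma wf_subst_aux:
  fixes s :: "nat \<Rightarrow> bvar \<Rightarrow> 'n neg option"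
  assumes cond: "\<And>c0 w. wfN ar (c0 @ cB) (Vr w) \<Longrightarrow> wfN ar (c0 @ cB') (substN s (length c0) (Vr w))"
  shows "(\<forall>x2 x3 x4. (\<exists>c0 P. x2 = ar \<and> x3 = c0 @ cB' \<and> x4 = substP s (length c0) P \<and> Defs.wfP ar (c0 @ cB) P) \<longrightarrow> Defs.wfP x2 x3 x4) \<and>
        (\<forall>x2 x3 x1. (\<exists>c0 N. x2 = ar \<and> x3 = c0 @ cB' \<and> x1 = substN s (length c0) N \<and> wfN ar (c0 @ cB) N) \<longrightarrow> wfN x2 x3 x1)"
proof (rule wfP_wfN.coinduct, goal_cases)
  case (1 x2 x3 x4)
  then obtain c0 P where h: "x2 = ar" "x3 = c0 @ cB'" "x4 = substP s (length c0) P" "Defs.wfP ar (c0 @ cB) P" by blast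
  show ?case
  proof (cases P)
    case (Act N a Ms)
    have "Defs.wfP ar (c0 @ cB) (Act N a Ms)" using h(4) Act by simp
    then have "wfN ar (c0 @ cB) N \<and> length Ms = ar a \<and> (\<forall>M\<in>set Ms. wfN ar (c0 @ cB) M)"
      by (rule wfP_ActE) blast
    then have w: "wfN ar (c0 @ cB) N" "length Ms = ar a" "\<forall>M\<in>set Ms. wfN ar (c0 @ cB) M" by auto
    let ?X2 = "\<lambda>x2 x3 x1. \<exists>c0 N. x2 = ar \<and> x3 = c0 @ cB' \<and> x1 = substN s (length c0) N \<and> wfN ar (c0 @ cB) N"
    have n: "?X2 ar (c0 @ cB') (substN s (length c0) N)" using w(1) by blast
    have m: "\<forall>M\<in>set (map (substN s (length c0)) Ms). ?X2 ar (c0 @ cB') M" using w(3) by auto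
    have l: "length (map (substN s (length c0)) Ms) = ar a" using w(2) by simp
    have x4: "x4 = Act (substN s (length c0) N) a (map (substN s (length c0)) Ms)" using h(3) Act by simp
    show ?thesis
      apply (rule disjI2, rule disjI2)
      apply (rule exI[of _ ar], rule exI[of _ "c0 @ cB'"], rule exI[of _ "substN s (length c0) N"],
          rule exI[of _ "map (substN s (length c0)) Ms"], rule exI[of _ a])
      using h(1,2) x4 n m l by simp
  next
    case Dai then show ?thesis using h by simp
  next
    case Omg then show ?thesis using h by simp
  qed
next
  case (2 x2 x3 x1)
  then obtain c0 N where h: "x2 = ar" "x3 = c0 @ cB'" "x1 = substN s (length c0) N" "wfN ar (c0 @ cB) N" by blast
  show ?case
  proof (cases N)
    case (Vr w)
    have "wfN ar (c0 @ cB') (substN s (length c0) (Vr w))" using h(4) Vr by (intro cond) simp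
    then have "wfN x2 x3 x1" using h Vr by simp
    then show ?thesis
    proof (cases rule: wfN.cases)
      case (1 x) then show ?thesis by (intro disjI1) simp
    next
      case (2 k l) then show ?thesis by (intro disjI2 disjI1) simp
    next
      case (3 f) then show ?thesis by (intro disjI2) simp
    qed
  next
    case (Sm f)
    have "wfN ar (c0 @ cB) (Sm f)" using h(4) Sm by simp
    then have fa: "\<forall>a. Defs.wfP ar (ar a # c0 @ cB) (f a)" by (rule wfN_SmE) blast
    have x1: "x1 = Sm (\<lambda>a. substP s (Suc (length c0)) (f a))" using h(3) Sm by simp
    have "\<forall>a. \<exists>c0' P. ar = ar \<and> ar a # c0 @ cB' = c0' @ cB' \<and> substP s (Suc (length c0)) (f a) = substP s (length c0') P \<and> Defs.wfP ar (c0' @ cB) P"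
    proof
      fix a show "\<exists>c0' P. ar = ar \<and> ar a # c0 @ cB' = c0' @ cB' \<and> substP s (Suc (length c0)) (f a) = substP s (length c0') P \<and> Defs.wfP ar (c0' @ cB) P"
        by (rule exI[of _ "ar a # c0"], rule exI[of _ "f a"]) (simp add: fa)
    qed
    then show ?thesis
      apply (rule_tac disjI2, rule_tac disjI2)
      apply (rule exI[of _ ar], rule exI[of _ "c0 @ cB'"], rule exI[of _ "\<lambda>a. substP s (Suc (length c0)) (f a)"])
      using h(1,2) x1 by simp
  qed
qed

lemma wfP_subst:
  fixes s :: "nat \<Rightarrow> bvar \<Rightarrow> 'n neg option"
  assumes "\<And>c0 w. wfN ar (c0 @ cB) (Vr w) \<Longrightarrow> wfN ar (c0 @ cB') (substN s (length c0) (Vr w))"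
    and "Defs.wfP ar cB P"
  shows "Defs.wfP ar cB' (substP s 0 P)"
proof -
  have A: "\<forall>x2 x3 x4. (\<exists>c0 P. x2 = ar \<and> x3 = c0 @ cB' \<and> x4 = substP s (length c0) P \<and> Defs.wfP ar (c0 @ cB) P) \<longrightarrow> Defs.wfP x2 x3 x4"
    using wf_subst_aux[OF assms(1)] by (rule conjunct1)
  have "\<exists>c0 P'. ar = ar \<and> cB' = c0 @ cB' \<and> substP s 0 P = substP s (length c0) P' \<and> Defs.wfP ar (c0 @ cB) P'"
    by (rule exI[of _ "[]"], rule exI[of _ P]) (simp add: assms(2))
  then show ?thesis using A by blast
qed

definition sO :: "'n neg list \<Rightarrow> nat \<Rightarrow> bvar \<Rightarrow> 'n neg option" where
  "sO Ns = (\<lambda>d v. case v of Bd k l \<Rightarrow> (if k = d \<and> l < length Ns then Some (Ns ! l) else None) | Fr x \<Rightarrow> None)"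

lemma openP_sO: "openP Ns = substP (sO Ns) 0" by (simp add: openP_def sO_def)

lemma VV_sO: "VV (sO (map (\<lambda>x. Vr (Fr x)) xs))"
  by (auto simp: VV_def sO_def split: bvar.splits if_splits)

lemma sw_sO: "sw (sO (map (\<lambda>x. Vr (Fr x)) xs)) D w =
   (case w of Bd k l \<Rightarrow> if k = D \<and> l < length xs then Fr (xs ! l) else w | Fr x \<Rightarrow> w)"
  by (auto simp: sw_def sO_def split: bvar.splits)

lemma standardN_nodes:
  assumes "standardN ar N" "psubN Q N" "Q = Act M b Ms"
  shows "node_cutfree M b Ms" "node_noid M b Ms" "node_linear M b Ms"
  using assms by (auto simp: standardN_def nodes_ok_def)

lemma open_vars_standard:
  fixes f :: "'n \<Rightarrow> 'n pos"
  assumes std: "standardN ar (Sm f)" and cl: "closedN (Sm f)" and dx: "distinct xs"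
    and len: "length xs = ar a" and nO: "f a \<noteq> Omg"
  shows "standardP ar (openP (map (\<lambda>x. Vr (Fr x)) xs) (f a))"
proof -
  let ?Vs = "map (\<lambda>x. Vr (Fr x)) xs :: 'n neg list"
  let ?s = "sO ?Vs"
  have vv: "VV ?s" by (rule VV_sO)
  have wfS: "wfN ar [] (Sm f)" using std by (simp add: standardN_def)
  then have wfa: "Defs.wfP ar [ar a] (f a)" by (rule wfN_SmE) blast
  have wf: "Defs.wfP ar [] (substP ?s 0 (f a))"
  proof (rule wfP_subst[where cB = "[ar a]"])
    fix c0 w assume h: "wfN ar (c0 @ [ar a]) (Vr w)"
    show "wfN ar (c0 @ []) (substN ?s (length c0) (Vr w))"
    proof (cases w)
      case (Fr x) then show ?thesis by (auto simp: sO_def intro: wfP_wfN.intros)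
    next
      case (Bd k l)
      then have kl: "k < length (c0 @ [ar a])" "l < (c0 @ [ar a]) ! k" using h by (auto elim: wfN_VrE)
      show ?thesis
      proof (cases "k = length c0")
        case True
        then have "l < length xs" using kl len by simp
        then show ?thesis using Bd True by (auto simp: sO_def intro: wfP_wfN.intros)
      next
        case False
        then have "k < length c0" "l < c0 ! k" using kl by (auto simp: nth_append)
        then show ?thesis using Bd False by (auto simp: sO_def intro: wfP_wfN.intros)
      qed
    qed
  qed (rule wfa)
  have noFr: "\<not> occP e (Fr x) (f a)" for e x
  proof
    assume "occP e (Fr x) (f a)"
    then have "occN (Suc e) (Fr x) (Sm f)" by auto
    then have "nrm (Suc e) (Fr x) = None" using cl unfolding closedN_occ by blast
    then show False by simp
  qed
  have nodes: "node_cutfree N' b Ms' \<and> node_noid N' b Ms' \<and> node_linear N' b Ms'"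
    if p: "psubP (Act N' b Ms') (substP ?s 0 (f a))" for N' b Ms'
  proof -
    obtain Q e where Q: "psubDP e Q (f a)" "Act N' b Ms' = substP ?s (0+e) Q"
      using psubP_subst[OF vv p] by blast
    then obtain N Ms where QA: "Q = Act N b Ms" "N' = substN ?s e N" "Ms' = map (substN ?s e) Ms"
      by (cases Q) auto
    have "psubN Q (Sm f)" using psubD_psub(1)[OF Q(1)] by auto
    note orig = standardN_nodes[OF std this QA(1)]
    have c1: "node_cutfree N' b Ms'" using node_cutfree_subst[OF vv orig(1)] QA by simp
    have c2: "node_noid N' b Ms'" using node_noid_subst[OF orig(2)] QA by simp
    define h where "h = (\<lambda>u. case u of Bd j l \<Rightarrow> if j = e \<and> l < length xs then Fr (xs ! l) else u | Fr x \<Rightarrow> u)"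
    have occX: "occP (e + e') w (f a)" if "X \<in> set (N # Ms)" "occN e' w X" for X e' w
      using occ_psubD(1)[OF Q(1), of e' w] that QA(1) by auto
    have c3: "node_linear (substN ?s e N) b (map (substN ?s e) Ms)"
    proof (rule node_linear_subst[OF vv orig(3), where h = h])
      fix X e' w u assume "X \<in> set (N # Ms)" "occN e' w X" "nrm e' w = Some u"
      then show "nrm e' (sw ?s (e + e') w) = Some (h u)"
        using noFr occX by (cases w) (auto simp: sw_sO h_def split: if_splits)
    next
      fix X e' w assume "X \<in> set (N # Ms)" "occN e' w X" "nrm e' w = None"
      then show "nrm e' (sw ?s (e + e') w) = None"
        using noFr occX by (cases w) (auto simp: sw_sO h_def split: if_splits)
    next
      have noFrV: "\<forall>X\<in>set (N # Ms). \<forall>x. Fr x \<notin> varsN X"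
      proof (intro ballI allI notI)
        fix X x assume X: "X \<in> set (N # Ms)" and "Fr x \<in> varsN X"
        then obtain e' w where "occN e' w X" "nrm e' w = Some (Fr x)" by (auto simp: varsN_occ)
        then have "occN e' (Fr x) X" by (simp add: nrm_Fr)
        then show False using noFr occX[OF X] by blast
      qed
      show "inj_on h (\<Union>X\<in>set (N # Ms). varsN X)"
      proof (rule inj_onI)
        fix u1 u2 assume u: "u1 \<in> (\<Union>X\<in>set (N # Ms). varsN X)" "u2 \<in> (\<Union>X\<in>set (N # Ms). varsN X)" "h u1 = h u2"
        obtain j1 l1 where u1: "u1 = Bd j1 l1" using u(1) noFrV by (cases u1) auto
        obtain j2 l2 where u2: "u2 = Bd j2 l2" using u(2) noFrV by (cases u2) auto
        show "u1 = u2" using u(3) u1 u2 dx by (auto simp: h_def nth_eq_iff_index_eq split: if_splits)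
      qed
    qed
    show ?thesis using c1 c2 c3 QA by simp
  qed
  have nOmg: "substP ?s 0 (f a) \<noteq> Omg" using nO by (cases "f a") auto
  have fv: "fvP (substP ?s 0 (f a)) \<subseteq> set xs"
  proof
    fix x assume "x \<in> fvP (substP ?s 0 (f a))"
    then obtain e where "occP e (Fr x) (substP ?s 0 (f a))" by (auto simp: fvP_occ)
    from occP_subst_VV[OF vv this] obtain w where w: "occP e w (f a) \<and> Fr x = sw ?s (0 + e) w" ..
    then show "x \<in> set xs" using noFr[of e] by (cases w) (auto simp: sw_sO split: if_splits)
  qed
  show ?thesis unfolding openP_sO standardP_def
    using wf nodes nOmg finite_subset[OF fv] by (auto simp: nodes_ok_def)
qed

definition sB :: "nat \<Rightarrow> nat \<Rightarrow> nat \<Rightarrow> bvar \<Rightarrow> 'n neg option" where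
  "sB x0 l = (\<lambda>d v. if v = Fr x0 then Some (Vr (Bd d l)) else None)"

lemma bindP_sB: "bindP x0 l = substP (sB x0 l) 0" by (simp add: bindP_def sB_def)

lemma VV_sB: "VV (sB x0 l)" by (auto simp: VV_def sB_def)

lemma sw_sB: "sw (sB x0 l) D w = (if w = Fr x0 then Bd D l else w)"
  by (auto simp: sw_def sB_def)

lemma bind_standard_nodes:
  fixes Q :: "'n pos"
  assumes std: "standardP ar Q" and p: "psubP (Act N' b Ms') (bindP x0 l Q)"
  shows "node_cutfree N' b Ms' \<and> node_noid N' b Ms' \<and> node_linear N' b Ms'"
proof -
  let ?s = "sB x0 l :: nat \<Rightarrow> bvar \<Rightarrow> 'n neg option"
  have vv: "VV ?s" by (rule VV_sB)
  have wf: "Defs.wfP ar [] Q" using std by (simp add: standardP_def)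
  obtain R e where R: "psubDP e R Q" "Act N' b Ms' = substP ?s (0+e) R"
    using psubP_subst[OF vv p[unfolded bindP_sB]] by blast
  then obtain N Ms where RA: "R = Act N b Ms" "N' = substN ?s e N" "Ms' = map (substN ?s e) Ms"
    by (cases R) auto
  have "psubP R Q" using psubD_psub(1)[OF R(1)] .
  then have orig: "node_cutfree N b Ms" "node_noid N b Ms" "node_linear N b Ms"
    using std RA(1) by (auto simp: standardP_def nodes_ok_def)
  have c1: "node_cutfree N' b Ms'" using node_cutfree_subst[OF vv orig(1)] RA by simp
  have c2: "node_noid N' b Ms'" using node_noid_subst[OF orig(2)] RA by simp
  define h where "h = (\<lambda>u. if u = Fr x0 then Bd e l else u)"
  have occX: "occP (e + e') w Q" if "X \<in> set (N # Ms)" "occN e' w X" for X e' w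
    using occ_psubD(1)[OF R(1), of e' w] that RA(1) by auto
  have c3: "node_linear (substN ?s e N) b (map (substN ?s e) Ms)"
  proof (rule node_linear_subst[OF vv orig(3), where h = h])
    fix X e' w u assume "X \<in> set (N # Ms)" "occN e' w X" "nrm e' w = Some u"
    then show "nrm e' (sw ?s (e + e') w) = Some (h u)"
      by (cases w) (auto simp: sw_sB h_def split: if_splits)
  next
    fix X e' w assume "X \<in> set (N # Ms)" "occN e' w X" "nrm e' w = None"
    then show "nrm e' (sw ?s (e + e') w) = None"
      by (cases w) (auto simp: sw_sB h_def split: if_splits)
  next
    have noB: "Bd e l \<notin> varsN X" if X: "X \<in> set (N # Ms)" for X
    proof
      assume "Bd e l \<in> varsN X"
      then obtain e' w where o: "occN e' w X" "nrm e' w = Some (Bd e l)" by (auto simp: varsN_occ)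
      then obtain k where k: "w = Bd k l" "e' \<le> k" "k - e' = e" by (cases w) (auto split: if_splits)
      have "occP (e + e') (Bd k l) Q" using occX[OF X o(1)] k by simp
      then have "k < e + e'" using wfP0_occ[OF wf] by blast
      then show False using k by arith
    qed
    show "inj_on h (\<Union>X\<in>set (N # Ms). varsN X)"
    proof (rule inj_onI)
      fix u1 u2 assume u: "u1 \<in> (\<Union>X\<in>set (N # Ms). varsN X)" "u2 \<in> (\<Union>X\<in>set (N # Ms). varsN X)" "h u1 = h u2"
      show "u1 = u2"
      proof (cases "u1 = Fr x0 \<or> u2 = Fr x0")
        case True
        then show ?thesis using u noB unfolding h_def by (auto split: if_splits)
      next
        case False
        then show ?thesis using u(3) unfolding h_def by auto
      qed
    qed
  qed
  show ?thesis using c1 c2 c3 RA by simp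
qed

lemma Eg_standard:
  fixes Q :: "'n pos"
  assumes std: "standardP ar Q" and at: "atomicP x0 Q" and l: "l < ar a"
  shows "standardN ar (Eg A0 x0 a l Q)"
proof -
  let ?s = "sB x0 l :: nat \<Rightarrow> bvar \<Rightarrow> 'n neg option"
  let ?g = "\<lambda>b. if b = a then bindP x0 l Q else if b \<in> fst ` A0 then Dai else Omg"
  have wf: "Defs.wfP ar [] Q" using std by (simp add: standardP_def)
  have wfb: "Defs.wfP ar [ar a] (bindP x0 l Q)"
    unfolding bindP_sB
  proof (rule wfP_subst[where cB = "[]"])
    fix c0 w assume h: "wfN ar (c0 @ []) (Vr w)"
    show "wfN ar (c0 @ [ar a]) (substN ?s (length c0) (Vr w))"
    proof (cases "w = Fr x0")
      case True then show ?thesis using l by (auto simp: sB_def intro!: wfP_wfN.intros)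
    next
      case False
      then have "substN ?s (length c0) (Vr w) = Vr w" by (simp add: sB_def)
      moreover have "wfN ar (c0 @ [ar a]) (Vr w)"
      proof (cases w)
        case (Fr x) then show ?thesis by (auto intro: wfP_wfN.intros)
      next
        case (Bd k l')
        then have "k < length c0" "l' < c0 ! k" using h by (auto elim: wfN_VrE)
        then show ?thesis using Bd by (auto simp: nth_append intro!: wfP_wfN.intros)
      qed
      ultimately show ?thesis by simp
    qed
  qed (rule wf)
  have wfE: "wfN ar [] (Sm ?g)"
    by (rule wfP_wfN.intros) (auto simp: wfb intro: wfP_wfN.intros)
  have cl: "closedN (Eg A0 x0 a l Q)" by (rule closedN_Eg[OF wf]) (use at in \<open>simp add: atomicP_def\<close>)
  have nodes: "node_cutfree N' b Ms' \<and> node_noid N' b Ms' \<and> node_linear N' b Ms'"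
    if p: "psubN (Act N' b Ms') (Sm ?g)" for N' b Ms'
  proof -
    obtain c where "psubP (Act N' b Ms') (?g c)" using p by auto
    then have "psubP (Act N' b Ms') (bindP x0 l Q)" by (auto split: if_splits)
    then show ?thesis by (rule bind_standard_nodes[OF std])
  qed
  have fv: "fvN (Eg A0 x0 a l Q) = {}" using cl by (auto simp: closedN_def fvN_def)
  show ?thesis unfolding standardN_def using wfE nodes fv
    by (auto simp: Eg_def nodes_ok_def)
qed

lemma perpP_eq: "\<forall>T\<in>S. atomicP x0 T \<Longrightarrow> perpP ar x0 S = {U. standardN ar U \<and> atomicN U \<and> (\<forall>T\<in>S. orth_at x0 T U)}"
  by (simp add: perpP_def)
lemma perpN_eq: "\<forall>T\<in>S. atomicN T \<Longrightarrow> perpN ar x0 S = {U. standardP ar U \<and> atomicP x0 U \<and> (\<forall>T\<in>S. orth_at x0 U T)}"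
  by (simp add: perpN_def)

lemma conn_facts:
  assumes "connective ar x0 zs A0 A0"
  shows "\<And>a xs. (a, xs) \<in> A0 \<Longrightarrow> distinct xs \<and> length xs = ar a \<and> set xs \<subseteq> set zs"
    and "\<And>a xs ys. (a, xs) \<in> A0 \<Longrightarrow> (a, ys) \<in> A0 \<Longrightarrow> xs = ys"
  using assms unfolding connective_def by fast+

lemma Nb_facts:
  assumes "a_behN ar x0 B"
  shows "\<forall>T\<in>B. atomicN T" "\<forall>T\<in>B. standardN ar T"
    "\<forall>T\<in>perpN ar x0 B. standardP ar T \<and> atomicP x0 T"
    "B = {U. standardN ar U \<and> atomicN U \<and> (\<forall>T\<in>perpN ar x0 B. orth_at x0 T U)}"
proof -
  show a: "\<forall>T\<in>B. atomicN T" "\<forall>T\<in>B. standardN ar T" using assms by (auto simp: a_behN_def)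
  show b: "\<forall>T\<in>perpN ar x0 B. standardP ar T \<and> atomicP x0 T" using a by (simp add: perpN_def)
  have "B = perpP ar x0 (perpN ar x0 B)" using assms by (simp add: a_behN_def)
  also have "\<dots> = {U. standardN ar U \<and> atomicN U \<and> (\<forall>T\<in>perpN ar x0 B. orth_at x0 T U)}"
    using b by (simp add: perpP_def)
  finally show "B = {U. standardN ar U \<and> atomicN U \<and> (\<forall>T\<in>perpN ar x0 B. orth_at x0 T U)}" .
qed

lemma std_wf_fv: "standardP ar Q \<Longrightarrow> atomicP x0 Q \<Longrightarrow> Defs.wfP ar [] Q \<and> fvP Q \<subseteq> {x0}"
  by (simp add: standardP_def atomicP_def)

lemma actsetE: "T \<in> actset x0 a Ss \<Longrightarrow> \<exists>Ms. T = Act (Vr (Fr x0)) a Ms \<and> length Ms = length Ss \<and> (\<forall>l<length Ss. Ms ! l \<in> Ss ! l)"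
  by (auto simp: actset_def)

context
  fixes ar :: "'n \<Rightarrow> nat" and x0 :: nat and zs :: "nat list"
    and A0 :: "('n \<times> nat list) set" and Nb :: "nat \<Rightarrow> 'n neg set"
  assumes conn: "connective ar x0 zs A0 A0"
    and N_beh: "\<forall>z \<in> set zs. a_behN ar x0 (Nb z)"
begin

lemma EC_elem:
  assumes "E \<in> alphaE_C ar x0 A0 Nb"
  shows "\<exists>a xs l Q. (a, xs) \<in> A0 \<and> l < length xs \<and> Q \<in> perpN ar x0 (Nb (xs ! l)) \<and>
     standardP ar Q \<and> atomicP x0 Q \<and> E = Eg A0 x0 a l Q"
proof -
  obtain a xs l Q where h: "(a, xs) \<in> A0" "l < length xs" "Q \<in> perpN ar x0 (Nb (xs ! l))" "E = Eg A0 x0 a l Q"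
    using assms unfolding alphaE_C_Eg by blast
  have "xs ! l \<in> set xs" using h(2) by simp
  then have "xs ! l \<in> set zs" using conn_facts(1)[OF conn h(1)] by blast
  then have "standardP ar Q \<and> atomicP x0 Q" using Nb_facts(3)[OF N_beh[rule_format, OF \<open>xs ! l \<in> set zs\<close>]] h(3) by blast
  then show ?thesis using h by blast
qed

lemma EC_closed: assumes "E \<in> alphaE_C ar x0 A0 Nb" shows "closedN E"
proof -
  obtain a xs l Q where h: "standardP ar Q" "atomicP x0 Q" "E = Eg A0 x0 a l Q"
    using EC_elem[OF assms] by blast
  have "Defs.wfP ar [] Q" "fvP Q \<subseteq> {x0}" using std_wf_fv[OF h(1,2)] by auto
  from closedN_Eg[OF this] show ?thesis using h(3) by simp
qed

lemma EC_perpN: "perpN ar x0 (alphaE_C ar x0 A0 Nb) =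
    {U. standardP ar U \<and> atomicP x0 U \<and> (\<forall>E\<in>alphaE_C ar x0 A0 Nb. orth_at x0 U E)}"
proof (rule perpN_eq, intro ballI)
  fix T assume "T \<in> alphaE_C ar x0 A0 Nb"
  then show "atomicN T" using EC_closed closedN_atomicN by blast
qed

lemma part1:
  assumes ne: "\<exists>(a, xs) \<in> A0. xs \<noteq> []"
  shows "perpN ar x0 (alphaE_C ar x0 A0 Nb) \<subseteq> (\<Union>(a, xs) \<in> A0. actset x0 a (map Nb xs)) \<union> {Dai}"
proof
  fix P assume "P \<in> perpN ar x0 (alphaE_C ar x0 A0 Nb)"
  then have P: "standardP ar P" "atomicP x0 P" "\<forall>E\<in>alphaE_C ar x0 A0 Nb. orth_at x0 P E"
    unfolding EC_perpN by auto
  show "P \<in> (\<Union>(a, xs) \<in> A0. actset x0 a (map Nb xs)) \<union> {Dai}"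
  proof (cases "P = Dai")
    case True then show ?thesis by simp
  next
    case False
    then obtain b Ms where PA: "P = Act (Vr (Fr x0)) b Ms" "length Ms = ar b"
      "\<forall>M\<in>set Ms. closedN M \<and> standardN ar M"
      using standard_atomic_pos[OF P(1,2)] by blast
    have Mcl: "\<forall>M\<in>set Ms. closedN M" using PA by blast
    obtain a0 xs0 where a0: "(a0, xs0) \<in> A0" "xs0 \<noteq> []" using ne by auto
    have "xs0 ! 0 \<in> set xs0" using a0(2) by simp
    then have z0: "xs0 ! 0 \<in> set zs" using conn_facts(1)[OF conn a0(1)] by blast
    have "Dai \<in> perpN ar x0 (Nb (xs0 ! 0))" using Nb_facts(1) N_beh z0 by (blast intro: Dai_perpN)
    then have "Eg A0 x0 a0 0 Dai \<in> alphaE_C ar x0 A0 Nb" unfolding alphaE_C_Eg using a0 by blast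
    then have o0: "orth_at x0 P (Eg A0 x0 a0 0 Dai)" using P(3) by blast
    have wfD: "Defs.wfP ar [] (Dai :: 'n pos)" "fvP (Dai :: 'n pos) \<subseteq> {x0}"
      using std_wf_fv[OF standardP_Dai atomicP_Dai] by auto
    have "b \<in> fst ` A0"
    proof (cases "b = a0")
      case True then show ?thesis using a0 by force
    next
      case False
      then show ?thesis using eg_orth_other[OF wfD Mcl False] o0 PA(1) by simp
    qed
    then obtain ys where ys: "(b, ys) \<in> A0" by auto
    have lys: "length ys = length Ms" using conn_facts(1)[OF conn ys] PA(2) by simp
    have "Ms ! l \<in> Nb (ys ! l)" if l: "l < length ys" for l
    proof -
      have z: "ys ! l \<in> set zs" using conn_facts(1)[OF conn ys] l by auto
      have M: "closedN (Ms ! l)" "standardN ar (Ms ! l)" using PA(3) l lys by auto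
      have "orth_at x0 Q (Ms ! l)" if Q: "Q \<in> perpN ar x0 (Nb (ys ! l))" for Q
      proof -
        have Qs: "standardP ar Q" "atomicP x0 Q" using Nb_facts(3) N_beh z Q by blast+
        have "Eg A0 x0 b l Q \<in> alphaE_C ar x0 A0 Nb" unfolding alphaE_C_Eg using ys l Q by blast
        then have "orth_at x0 P (Eg A0 x0 b l Q)" using P(3) by blast
        moreover have "orth_at x0 (Act (Vr (Fr x0)) b Ms) (Eg A0 x0 b l Q) \<longleftrightarrow> orth_at x0 Q (Ms ! l)"
          using std_wf_fv[OF Qs] Mcl l lys by (intro eg_orth) auto
        ultimately show ?thesis using PA(1) by simp
      qed
      then show ?thesis using Nb_facts(4)[OF N_beh[rule_format, OF z]] M closedN_atomicN by blast
    qed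
    then have "P \<in> actset x0 b (map Nb ys)" using PA(1) lys unfolding actset_def by auto
    then show ?thesis using ys by blast
  qed
qed

lemma U_atomic: "\<forall>T\<in>(\<Union>(a, xs) \<in> A0. actset x0 a (map Nb xs)). atomicP x0 T"
proof
  fix T assume "T \<in> (\<Union>(a, xs) \<in> A0. actset x0 a (map Nb xs))"
  then obtain a xs where h: "(a, xs) \<in> A0" "T \<in> actset x0 a (map Nb xs)" by blast
  have "\<forall>l<length (map Nb xs). \<forall>M\<in>map Nb xs ! l. atomicN M"
  proof (intro allI impI ballI)
    fix l M assume l: "l < length (map Nb xs)" and M: "M \<in> map Nb xs ! l"
    then have "xs ! l \<in> set xs" by simp
    then have "xs ! l \<in> set zs" using conn_facts(1)[OF conn h(1)] by blast
    moreover have "M \<in> Nb (xs ! l)" using M l by simp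
    ultimately show "atomicN M" using Nb_facts(1)[OF N_beh[rule_format]] by blast
  qed
  then show "atomicP x0 T" by (rule actset_atomic[OF _ h(2)])
qed

lemma part2: "alphaE ar x0 A0 Nb \<subseteq> perpN ar x0 (alphaE_C ar x0 A0 Nb)"
proof -
  let ?U = "\<Union>(a, xs) \<in> A0. actset x0 a (map Nb xs)"
  have pU: "perpP ar x0 ?U = {V. standardN ar V \<and> atomicN V \<and> (\<forall>T\<in>?U. orth_at x0 T V)}"
    using perpP_eq[OF U_atomic] .
  have sub: "alphaE_C ar x0 A0 Nb \<subseteq> perpP ar x0 ?U"
  proof
    fix E assume E: "E \<in> alphaE_C ar x0 A0 Nb"
    then obtain a xs l Q where h: "(a, xs) \<in> A0" "l < length xs" "Q \<in> perpN ar x0 (Nb (xs ! l))"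
      "standardP ar Q" "atomicP x0 Q" "E = Eg A0 x0 a l Q" using EC_elem by blast
    have cf: "distinct xs \<and> length xs = ar a \<and> set xs \<subseteq> set zs" using conn_facts(1)[OF conn h(1)] .
    have std: "standardN ar E" using Eg_standard[OF h(4,5)] h(2,6) cf by simp
    have at: "atomicN E" using EC_closed[OF E] closedN_atomicN by blast
    have "orth_at x0 T E" if T: "T \<in> ?U" for T
    proof -
      obtain a' xs' where h': "(a', xs') \<in> A0" "T \<in> actset x0 a' (map Nb xs')" using T by blast
      obtain Ms where Ms: "T = Act (Vr (Fr x0)) a' Ms" "length Ms = length xs'"
        "\<forall>j<length xs'. Ms ! j \<in> Nb (xs' ! j)" using actsetE[OF h'(2)] by auto
      have cf': "set xs' \<subseteq> set zs" using conn_facts(1)[OF conn h'(1)] by blast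
      have Mcl: "\<forall>M\<in>set Ms. closedN M"
      proof
        fix M assume "M \<in> set Ms"
        then obtain j where j: "j < length Ms" "M = Ms ! j" by (auto simp: in_set_conv_nth)
        then have z: "xs' ! j \<in> set zs" using cf' Ms(2) by auto
        have "M \<in> Nb (xs' ! j)" using Ms(2,3) j by simp
        then show "closedN M" using Nb_facts(1,2)[OF N_beh[rule_format, OF z]] std_atomicN_closed by blast
      qed
      have wq: "Defs.wfP ar [] Q" "fvP Q \<subseteq> {x0}" using std_wf_fv[OF h(4,5)] by auto
      show ?thesis
      proof (cases "a' = a")
        case True
        then have "xs' = xs" using conn_facts(2)[OF conn] h(1) h'(1) by blast
        then have "Ms ! l \<in> Nb (xs ! l)" "l < length Ms" using Ms h(2) by auto
        have z: "xs ! l \<in> set zs" using cf h(2) nth_mem by blast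
        have "Q \<in> {U. standardP ar U \<and> atomicP x0 U \<and> (\<forall>T\<in>Nb (xs ! l). orth_at x0 U T)}"
          using h(3) perpN_eq[OF Nb_facts(1)[OF N_beh[rule_format, OF z]]] by simp
        then have "orth_at x0 Q (Ms ! l)" using \<open>Ms ! l \<in> Nb (xs ! l)\<close> by blast
        then show ?thesis using eg_orth[OF wq Mcl \<open>l < length Ms\<close>] Ms(1) True h(6) by simp
      next
        case False
        have "a' \<in> fst ` A0" using h'(1) by force
        then show ?thesis using eg_orth_other[OF wq Mcl False] Ms(1) h(6) by simp
      qed
    qed
    then have "\<forall>T\<in>?U. orth_at x0 T E" by blast
    then show "E \<in> perpP ar x0 ?U" unfolding pU using std at by blast
  qed
  show ?thesis
  proof
    fix P assume "P \<in> alphaE ar x0 A0 Nb"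
    then have "P \<in> perpN ar x0 (perpP ar x0 ?U)" by (simp add: alphaE_def)
    then have P: "standardP ar P" "atomicP x0 P" "\<forall>V\<in>perpP ar x0 ?U. orth_at x0 P V"
      using perpN_eq[of "perpP ar x0 ?U"] pU by auto
    have "\<forall>E\<in>alphaE_C ar x0 A0 Nb. orth_at x0 P E" using P(3) sub by blast
    then show "P \<in> perpN ar x0 (alphaE_C ar x0 A0 Nb)" unfolding EC_perpN using P(1,2) by blast
  qed
qed

end

context
  fixes ar :: "'n \<Rightarrow> nat" and x0 :: nat and zs :: "nat list"
    and A0 :: "('n \<times> nat list) set" and Pb :: "nat \<Rightarrow> 'n pos set"
  assumes conn: "connective ar x0 zs A0 A0"
    and P_beh: "\<forall>z \<in> set zs. a_behP ar x0 (Pb z)"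
begin

lemma PP_facts:
  assumes "z \<in> set zs"
  shows "perpP ar x0 (Pb z) = {U. standardN ar U \<and> atomicN U \<and> (\<forall>T\<in>Pb z. orth_at x0 T U)}"
    "\<forall>M\<in>perpP ar x0 (Pb z). standardN ar M \<and> atomicN M \<and> closedN M"
    "perpP ar x0 (Pb z) \<noteq> {}"
proof -
  have b: "a_behP ar x0 (Pb z)" using P_beh assms by blast
  show e: "perpP ar x0 (Pb z) = {U. standardN ar U \<and> atomicN U \<and> (\<forall>T\<in>Pb z. orth_at x0 T U)}"
    by (rule a_behP_perp[OF b])
  show "\<forall>M\<in>perpP ar x0 (Pb z). standardN ar M \<and> atomicN M \<and> closedN M"
    unfolding e using std_atomicN_closed by blast
  show "perpP ar x0 (Pb z) \<noteq> {}" by (rule perpP_nonempty[OF b])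
qed

lemma S_atomic:
  assumes "(a, xs) \<in> A0"
  shows "\<forall>T\<in>actset x0 a (map (\<lambda>z. perpP ar x0 (Pb z)) xs). atomicP x0 T"
proof
  fix T assume T: "T \<in> actset x0 a (map (\<lambda>z. perpP ar x0 (Pb z)) xs)"
  have "\<forall>l<length (map (\<lambda>z. perpP ar x0 (Pb z)) xs). \<forall>M\<in>map (\<lambda>z. perpP ar x0 (Pb z)) xs ! l. atomicN M"
  proof (intro allI impI ballI)
    fix l M assume l: "l < length (map (\<lambda>z. perpP ar x0 (Pb z)) xs)" and M: "M \<in> map (\<lambda>z. perpP ar x0 (Pb z)) xs ! l"
    then have "xs ! l \<in> set xs" by simp
    then have z: "xs ! l \<in> set zs" using conn_facts(1)[OF conn assms] by blast
    have "M \<in> perpP ar x0 (Pb (xs ! l))" using M l by simp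
    then show "atomicN M" using PP_facts(2)[OF z] by blast
  qed
  then show "atomicP x0 T" by (rule actset_atomic[OF _ T])
qed

lemma IC_atomic: "\<forall>T\<in>alphaI_C ar x0 A0 Pb. atomicP x0 T"
proof
  fix T assume "T \<in> alphaI_C ar x0 A0 Pb"
  then obtain a xs where "(a, xs) \<in> A0" "T \<in> actset x0 a (map (\<lambda>z. perpP ar x0 (Pb z)) xs)"
    unfolding alphaI_C_def by blast
  then show "atomicP x0 T" using S_atomic by blast
qed

lemma part4: "alphaI ar x0 A0 Pb = perpP ar x0 (alphaI_C ar x0 A0 Pb)"
proof -
  let ?S = "\<lambda>a xs. actset x0 a (map (\<lambda>z. perpP ar x0 (Pb z)) xs)"
  have e1: "perpP ar x0 (?S a xs) = {U. standardN ar U \<and> atomicN U \<and> (\<forall>T\<in>?S a xs. orth_at x0 T U)}"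
    if "(a, xs) \<in> A0" for a xs using perpP_eq[OF S_atomic[OF that]] .
  have e2: "perpP ar x0 (alphaI_C ar x0 A0 Pb) = {U. standardN ar U \<and> atomicN U \<and> (\<forall>T\<in>alphaI_C ar x0 A0 Pb. orth_at x0 T U)}"
    using perpP_eq[OF IC_atomic] .
  show ?thesis
  proof (rule set_eqI)
    fix U
    have "U \<in> alphaI ar x0 A0 Pb \<longleftrightarrow> standardN ar U \<and> atomicN U \<and> (\<forall>(a, xs)\<in>A0. U \<in> perpP ar x0 (?S a xs))"
      unfolding alphaI_def by blast
    also have "\<dots> \<longleftrightarrow> standardN ar U \<and> atomicN U \<and> (\<forall>(a, xs)\<in>A0. \<forall>T\<in>?S a xs. orth_at x0 T U)"
      using e1 by auto
    also have "\<dots> \<longleftrightarrow> U \<in> perpP ar x0 (alphaI_C ar x0 A0 Pb)"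
      by (simp only: e2 mem_Collect_eq) (unfold alphaI_C_def, blast)
    finally show "U \<in> alphaI ar x0 A0 Pb \<longleftrightarrow> U \<in> perpP ar x0 (alphaI_C ar x0 A0 Pb)" .
  qed
qed


lemma part3_key:
  assumes Sf: "Sm f \<in> perpP ar x0 (alphaI_C ar x0 A0 Pb)" and ax: "(a, xs) \<in> A0"
    and lN: "length Ns = length xs" and Ns: "\<forall>l<length xs. Ns ! l \<in> perpP ar x0 (Pb (xs ! l))"
  shows "converges (openP Ns (f a)) \<and> closedP (openP Ns (f a))"
proof -
  have cf: "distinct xs" "length xs = ar a" "set xs \<subseteq> set zs" using conn_facts(1)[OF conn ax] by auto
  have S: "standardN ar (Sm f)" "atomicN (Sm f)" "\<forall>T\<in>alphaI_C ar x0 A0 Pb. orth_at x0 T (Sm f)"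
    using Sf unfolding perpP_eq[OF IC_atomic] by auto
  have cl: "closedN (Sm f)" using std_atomicN_closed[OF S(1,2)] .
  have Ncl: "\<forall>M\<in>set Ns. closedN M"
  proof
    fix M assume "M \<in> set Ns"
    then obtain l where l: "l < length Ns" "M = Ns ! l" by (auto simp: in_set_conv_nth)
    then have "xs ! l \<in> set xs" using lN by simp
    then have z: "xs ! l \<in> set zs" using cf(3) by blast
    show "closedN M" using PP_facts(2)[OF z] Ns l lN by auto
  qed
  have "Act (Vr (Fr x0)) a Ns \<in> actset x0 a (map (\<lambda>z. perpP ar x0 (Pb z)) xs)"
    unfolding actset_def using lN Ns by auto
  then have "Act (Vr (Fr x0)) a Ns \<in> alphaI_C ar x0 A0 Pb" unfolding alphaI_C_def using ax by blast
  then have "orth_at x0 (Act (Vr (Fr x0)) a Ns) (Sm f)" using S(3) by blast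
  then have conv: "converges (openP Ns (f a))" using orth_act[OF cl Ncl] by simp
  have wfS: "wfN ar [] (Sm f)" using S(1) by (simp add: standardN_def)
  then have wfa: "Defs.wfP ar [ar a] (f a)" by (rule wfN_SmE) blast
  have "closedP (substP (sO Ns) 0 (f a))"
  proof (rule closedP_substP)
    fix e w assume o: "occP e w (f a)"
    show "case sO Ns e w of None \<Rightarrow> nrm e w = None | Some M \<Rightarrow> closedN M"
    proof (cases w)
      case (Fr x)
      then have "occN (Suc e) (Fr x) (Sm f)" using o by auto
      then have "nrm (Suc e) (Fr x) = None" using cl unfolding closedN_occ by blast
      then show ?thesis by simp
    next
      case (Bd k l)
      have "occN (Suc e) (Bd k l) (Sm f)" using o Bd by auto
      then have "nrm (Suc e) (Bd k l) = None" using cl unfolding closedN_occ by blast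
      then have k: "k \<le> e" by (simp split: if_splits)
      have "e \<le> k \<longrightarrow> l < [ar a] ! (k - e)" using wf_occ(1)[OF o[unfolded Bd]] wfa by blast
      then show ?thesis using k Bd lN cf(2) Ncl
        by (cases "k = e") (auto simp: sO_def)
    qed
  qed
  then show ?thesis using conv by (simp add: openP_sO)
qed

lemma part3:
  assumes Sf: "Sm f \<in> perpP ar x0 (alphaI_C ar x0 A0 Pb)" and ax: "(a, xs) \<in> A0"
  shows "openP (map (\<lambda>x. Vr (Fr x)) xs) (f a) \<in> perp_anti ar (antiset xs (map (\<lambda>z. perpP ar x0 (Pb z)) xs))"
proof -
  have cf: "distinct xs" "length xs = ar a" "set xs \<subseteq> set zs" using conn_facts(1)[OF conn ax] by auto
  have S: "standardN ar (Sm f)" "atomicN (Sm f)"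
    using Sf unfolding perpP_eq[OF IC_atomic] by auto
  have cl: "closedN (Sm f)" using std_atomicN_closed[OF S(1,2)] .
  have nO: "f a \<noteq> Omg"
  proof
    assume fO: "f a = Omg"
    let ?Ns = "map (\<lambda>z. SOME N. N \<in> perpP ar x0 (Pb z)) xs"
    have "\<forall>l<length xs. ?Ns ! l \<in> perpP ar x0 (Pb (xs ! l))"
    proof (intro allI impI)
      fix l assume l: "l < length xs"
      then have "xs ! l \<in> set zs" using cf(3) nth_mem by blast
      then have "perpP ar x0 (Pb (xs ! l)) \<noteq> {}" by (rule PP_facts(3))
      then show "?Ns ! l \<in> perpP ar x0 (Pb (xs ! l))" using l by (simp add: some_in_eq)
    qed
    then have "converges (openP ?Ns (f a))" using part3_key[OF Sf ax] by simp
    then show False using fO by simp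
  qed
  have std: "standardP ar (openP (map (\<lambda>x. Vr (Fr x)) xs) (f a))"
    by (rule open_vars_standard[OF S(1) cl cf(1,2) nO])
  have noFr: "\<not> occP e (Fr x) (f a)" for e x
  proof
    assume "occP e (Fr x) (f a)"
    then have "occN (Suc e) (Fr x) (Sm f)" by auto
    then have "nrm (Suc e) (Fr x) = None" using cl unfolding closedN_occ by blast
    then show False by simp
  qed
  have "orth_anti (openP (map (\<lambda>x. Vr (Fr x)) xs) (f a)) \<sigma>"
    if \<sigma>: "\<sigma> \<in> antiset xs (map (\<lambda>z. perpP ar x0 (Pb z)) xs)" for \<sigma>
  proof -
    let ?Ns = "map (\<lambda>x. the (\<sigma> x)) xs"
    have sg: "\<forall>l<length xs. \<exists>N\<in>perpP ar x0 (Pb (xs ! l)). \<sigma> (xs ! l) = Some N"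
      using \<sigma> unfolding antiset_def by auto
    then have Ns: "\<forall>l<length xs. ?Ns ! l \<in> perpP ar x0 (Pb (xs ! l))"
      by auto
    have eq: "fsubstP \<sigma> (openP (map (\<lambda>x. Vr (Fr x)) xs) (f a)) = openP ?Ns (f a)"
      unfolding fsubstP_def openP_sO
    proof (rule substP_comp)
      fix e w assume o: "occP e w (f a)"
      show "substN (\<lambda>d v. case v of Fr x \<Rightarrow> \<sigma> x | Bd k l \<Rightarrow> None) (0 + e)
              (substN (sO (map (\<lambda>x. Vr (Fr x)) xs)) (0 + e) (Vr w)) = substN (sO ?Ns) (0 + e) (Vr w)"
      proof (cases w)
        case (Fr x) then show ?thesis using noFr o by blast
      next
        case (Bd k l)
        show ?thesis
        proof (cases "k = e \<and> l < length xs")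
          case True
          then obtain N where N: "\<sigma> (xs ! l) = Some N" using sg by blast
          then show ?thesis using Bd True by (auto simp: sO_def)
        next
          case False then show ?thesis using Bd by (auto simp: sO_def)
        qed
      qed
    qed
    have "converges (openP ?Ns (f a)) \<and> closedP (openP ?Ns (f a))"
      using part3_key[OF Sf ax] Ns by simp
    then show ?thesis unfolding orth_anti_def eq by simp
  qed
  then show ?thesis unfolding perp_anti_def using std by blast
qed

end

theorem lemma15:
  fixes ar :: "'n \<Rightarrow> nat" and x0 :: nat and zs :: "nat list"
    and A0 :: "('n \<times> nat list) set"
    and Pb :: "nat \<Rightarrow> 'n pos set" and Nb :: "nat \<Rightarrow> 'n neg set"
  assumes conn: "connective ar x0 zs A0 A0"
    and P_beh: "\<forall>z \<in> set zs. a_behP ar x0 (Pb z)"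
    and N_beh: "\<forall>z \<in> set zs. a_behN ar x0 (Nb z)"
  shows "((\<exists>(a, xs) \<in> A0. xs \<noteq> []) \<longrightarrow>
           perpN ar x0 (alphaE_C ar x0 A0 Nb)
             \<subseteq> (\<Union>(a, xs) \<in> A0. actset x0 a (map Nb xs)) \<union> {Dai})
    \<and> alphaE ar x0 A0 Nb \<subseteq> perpN ar x0 (alphaE_C ar x0 A0 Nb)
    \<and> (\<forall>f. Sm f \<in> perpP ar x0 (alphaI_C ar x0 A0 Pb) \<longrightarrow>
           (\<forall>(a, xs) \<in> A0. openP (map (\<lambda>x. Vr (Fr x)) xs) (f a)
               \<in> perp_anti ar (antiset xs (map (\<lambda>z. perpP ar x0 (Pb z)) xs))))
    \<and> alphaI ar x0 A0 Pb = perpP ar x0 (alphaI_C ar x0 A0 Pb)"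
proof -
  have p1: "(\<exists>(a, xs) \<in> A0. xs \<noteq> []) \<longrightarrow>
           perpN ar x0 (alphaE_C ar x0 A0 Nb)
             \<subseteq> (\<Union>(a, xs) \<in> A0. actset x0 a (map Nb xs)) \<union> {Dai}"
    using part1[OF conn N_beh] by blast
  have p2: "alphaE ar x0 A0 Nb \<subseteq> perpN ar x0 (alphaE_C ar x0 A0 Nb)"
    by (rule part2[OF conn N_beh])
  have p3: "\<forall>f. Sm f \<in> perpP ar x0 (alphaI_C ar x0 A0 Pb) \<longrightarrow>
           (\<forall>(a, xs) \<in> A0. openP (map (\<lambda>x. Vr (Fr x)) xs) (f a)
               \<in> perp_anti ar (antiset xs (map (\<lambda>z. perpP ar x0 (Pb z)) xs)))"
    using part3[OF conn P_beh] by blast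
  have p4: "alphaI ar x0 A0 Pb = perpP ar x0 (alphaI_C ar x0 A0 Pb)"
    by (rule part4[OF conn P_beh])
  show ?thesis using p1 p2 p3 p4 by blast
qed

end
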